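(* For all $d,k\in\mathbb{N}$ and all $\mathbf{x}_1,\mathbf{x}_2\in\mathcal{G}_{d,k}$, $$\mathsf{bary}(\mathbf{x}_1,\mathbf{x}_2)=\mathbf{x}_1\cdot\exp\Big(\tfrac12\log(\mathbf{x}_1^{-1}\cdot\mathbf{x}_2)\Big).$$
   Context: $T_{d,k}=\bigoplus_{\ell=0}^k(\mathbb{R}^d)^{\otimes\ell}$ is the truncated tensor algebra with product the bilinear extension of the tensor product of levels, set to $0$ when the total level exceeds $k$. $\mathfrak{g}_{d,k}$ is the smallest Lie subalgebra (commutator bracket) of $T_{d,k}$ containing $e_1,\dots,e_d\in\mathbb{R}^d$; $\exp(\mathbf{z})=\sum_{\ell=0}^k\mathbf{z}^{\otimes\ell}/\ell!$; $\mathcal{G}_{d,k}=\exp(\mathfrak{g}_{d,k})$, a group under the product of $T_{d,k}$, and $\log:\mathcal{G}_{d,k}\to\mathfrak{g}_{d,k}$, $\log(\mathbf{s})=\sum_{\ell\ge1}\frac{(-1)^{\ell+1}}{\ell}(\mathbf{s}-1)^{\otimes\ell}$, is the inverse of $\exp$. For $\mathbf{x}\in\mathcal{G}_{d,k}^N$, $\mathsf{bary}(\mathbf{x})$ is the unique $\mathbf{m}\in\mathcal{G}_{d,k}$ with $\sum_{i=1}^N\log(\mathbf{m}^{-1}\mathbf{x}_i)=0$. *)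

theory Defs
  imports Complex_Main "HOL-Library.Function_Algebras"
begin

text \<open>Elements of the truncated tensor algebra T_{d,k} are represented by their
coordinates with respect to the basis of words: a tensor is a function from
words (lists of letters 0..d-1) to real coefficients.\<close>

type_synonym tensor = "nat list \<Rightarrow> real"

definition Tset :: "nat \<Rightarrow> nat \<Rightarrow> tensor set" where
  "Tset d k = {x. \<forall>w. x w \<noteq> 0 \<longrightarrow> length w \<le> k \<and> set w \<subseteq> {..<d}}"

definition tone :: tensor where
  "tone = (\<lambda>w. if w = [] then 1 else 0)"

definition tsmul :: "real \<Rightarrow> tensor \<Rightarrow> tensor" where
  "tsmul c x = (\<lambda>w. c * x w)"

definition tmul :: "nat \<Rightarrow> tensor \<Rightarrow> tensor \<Rightarrow> tensor" where
  "tmul k a b = (\<lambda>w. if length w \<le> k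
      then (\<Sum>i\<le>length w. a (take i w) * b (drop i w)) else 0)"

primrec tpow :: "nat \<Rightarrow> tensor \<Rightarrow> nat \<Rightarrow> tensor" where
  "tpow k x 0 = tone"
| "tpow k x (Suc n) = tmul k (tpow k x n) x"

definition texp :: "nat \<Rightarrow> tensor \<Rightarrow> tensor" where
  "texp k z = (\<Sum>l\<le>k. tsmul (1 / fact l) (tpow k z l))"

text \<open>log of an element with level-0 part 1: the series terminates after level k,
since (s - 1) has no level-0 component and powers beyond k vanish.\<close>
definition tlog :: "nat \<Rightarrow> tensor \<Rightarrow> tensor" where
  "tlog k s = (\<Sum>l\<in>{1..k}. tsmul ((-1) ^ (l + 1) / real l) (tpow k (s - tone) l))"

definition tbracket :: "nat \<Rightarrow> tensor \<Rightarrow> tensor \<Rightarrow> tensor" where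
  "tbracket k a b = tmul k a b - tmul k b a"

text \<open>Basis vector e_i of level 1 (index i < d); it lives in T_{d,k} only when k \<ge> 1,
so it is truncated to 0 when k = 0.\<close>
definition tgen :: "nat \<Rightarrow> nat \<Rightarrow> tensor" where
  "tgen k i = (\<lambda>w. if w = [i] \<and> 1 \<le> k then 1 else 0)"

inductive_set liealg :: "nat \<Rightarrow> nat \<Rightarrow> tensor set" for d k where
  gen: "i < d \<Longrightarrow> tgen k i \<in> liealg d k"
| zero: "0 \<in> liealg d k"
| add: "a \<in> liealg d k \<Longrightarrow> b \<in> liealg d k \<Longrightarrow> a + b \<in> liealg d k"
| smul: "a \<in> liealg d k \<Longrightarrow> tsmul c a \<in> liealg d k"
| bracket: "a \<in> liealg d k \<Longrightarrow> b \<in> liealg d k \<Longrightarrow> tbracket k a b \<in> liealg d k"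

definition Gset :: "nat \<Rightarrow> nat \<Rightarrow> tensor set" where
  "Gset d k = texp k ` liealg d k"

definition tinv :: "nat \<Rightarrow> nat \<Rightarrow> tensor \<Rightarrow> tensor" where
  "tinv d k x = (THE y. y \<in> Tset d k \<and> tmul k x y = tone \<and> tmul k y x = tone)"

definition bary :: "nat \<Rightarrow> nat \<Rightarrow> tensor list \<Rightarrow> tensor" where
  "bary d k xs = (THE m. m \<in> Gset d k \<and>
      sum_list (map (\<lambda>x. tlog k (tmul k (tinv d k m) x)) xs) = 0)"

end

theory Submission
  imports Defs "HOL-Computational_Algebra.Formal_Power_Series" "HOL-Library.Multiset"
begin

unbundle fps_syntax

datatype ts = TS (coef: "nat list \<Rightarrow> real")

lemma ts_eqI: "(\<And>w. coef x w = coef y w) \<Longrightarrow> x = y"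
  by (cases x; cases y) auto

instantiation ts :: real_algebra_1
begin
definition "0 = TS (\<lambda>w. 0)"
definition "1 = TS (\<lambda>w. if w = [] then 1 else 0)"
definition "x + y = TS (\<lambda>w. coef x w + coef y w)"
definition "x - y = TS (\<lambda>w. coef x w - coef y w)"
definition "- x = TS (\<lambda>w. - coef x w)"
definition "scaleR c x = TS (\<lambda>w. c * coef x w)"
definition "x * y = TS (\<lambda>w. \<Sum>i\<le>length w. coef x (take i w) * coef y (drop i w))"

lemma coef_simps [simp]:
  "coef 0 w = 0" "coef 1 w = (if w = [] then 1 else 0)"
  "coef (x + y) w = coef x w + coef y w" "coef (x - y) w = coef x w - coef y w"
  "coef (- x) w = - coef x w" "coef (scaleR c x) w = c * coef x w"
  by (simp_all add: zero_ts_def one_ts_def plus_ts_def minus_ts_def uminus_ts_def scaleR_ts_def)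

lemma coef_mult: "coef (x * y) w = (\<Sum>i\<le>length w. coef x (take i w) * coef y (drop i w))"
  by (simp add: times_ts_def)

lemma mult_assoc_aux:
  fixes a b c :: ts
  shows "coef (a * b * c) w = coef (a * (b * c)) w"
proof -
  let ?n = "length w"
  define g where "g j l = coef a (take j w) * coef b (take l (drop j w)) * coef c (drop l (drop j w))" for j l
  have "coef (a * b * c) w = (\<Sum>i\<le>?n. \<Sum>j\<le>i. g j (i - j))"
    unfolding coef_mult g_def
    by (auto simp: sum_distrib_right min_def drop_take intro!: sum.cong)
  also have "\<dots> = (\<Sum>(j,l)\<in>{(j,l). j + l \<le> ?n}. g j l)"
    by (rule sum.triangle_reindex_eq[symmetric])
  also have "{(j,l). j + l \<le> ?n} = Sigma {..?n} (\<lambda>j. {..?n - j})" by auto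
  also have "(\<Sum>(j,l)\<in>Sigma {..?n} (\<lambda>j. {..?n - j}). g j l) = (\<Sum>j\<le>?n. \<Sum>l\<le>?n - j. g j l)"
    by (rule sum.Sigma[symmetric]) auto
  also have "\<dots> = coef (a * (b * c)) w"
    unfolding coef_mult g_def by (auto simp: sum_distrib_left mult.assoc intro!: sum.cong)
  finally show ?thesis .
qed

lemma one_mult_aux: "coef (1 * a) w = coef a w"
proof -
  have "coef (1 * a) w = (\<Sum>i\<in>{0}. coef (1::ts) (take i w) * coef a (drop i w))"
    unfolding coef_mult by (rule sum.mono_neutral_right) (auto simp: one_ts_def)
  then show ?thesis by (simp add: one_ts_def)
qed

lemma mult_one_aux: "coef (a * 1) w = coef a w"
proof -
  have "coef (a * 1) w = (\<Sum>i\<in>{length w}. coef a (take i w) * coef (1::ts) (drop i w))"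
    unfolding coef_mult by (rule sum.mono_neutral_right) (auto simp: one_ts_def)
  then show ?thesis by (simp add: one_ts_def)
qed

instance
proof
  fix a b c :: ts and r s :: real
  show "a * b * c = a * (b * c)" by (rule ts_eqI, rule mult_assoc_aux)
  show "(a + b) * c = a * c + b * c"
    by (rule ts_eqI) (simp add: coef_mult distrib_right sum.distrib)
  show "a * (b + c) = a * b + a * c"
    by (rule ts_eqI) (simp add: coef_mult distrib_left sum.distrib)
  show "1 * a = a" by (rule ts_eqI, rule one_mult_aux)
  show "a * 1 = a" by (rule ts_eqI, rule mult_one_aux)
  show "a + b + c = a + (b + c)" by (rule ts_eqI) simp
  show "a + b = b + a" by (rule ts_eqI) simp
  show "0 + a = a" by (rule ts_eqI) simp
  show "- a + a = 0" by (rule ts_eqI) simp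
  show "a - b = a + - b" by (rule ts_eqI) simp
  show "(0::ts) \<noteq> 1" by (metis coef_simps(1,2) zero_neq_one)
  show "r *\<^sub>R (a + b) = r *\<^sub>R a + r *\<^sub>R b" by (rule ts_eqI) (simp add: algebra_simps)
  show "(r + s) *\<^sub>R a = r *\<^sub>R a + s *\<^sub>R a" by (rule ts_eqI) (simp add: algebra_simps)
  show "r *\<^sub>R s *\<^sub>R a = (r * s) *\<^sub>R a" by (rule ts_eqI) (simp add: algebra_simps)
  show "1 *\<^sub>R a = a" by (rule ts_eqI) simp
  show "r *\<^sub>R a * b = r *\<^sub>R (a * b)" by (rule ts_eqI) (simp add: coef_mult sum_distrib_left algebra_simps)
  show "a * r *\<^sub>R b = r *\<^sub>R (a * b)" by (rule ts_eqI) (simp add: coef_mult sum_distrib_left algebra_simps)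
qed
end

lemma coef_sum: "coef (\<Sum>i\<in>A. f i) w = (\<Sum>i\<in>A. coef (f i) w)"
  by (induction A rule: infinite_finite_induct) auto




definition eqk :: "nat \<Rightarrow> ts \<Rightarrow> ts \<Rightarrow> bool" where
  "eqk k x y \<longleftrightarrow> (\<forall>w. length w \<le> k \<longrightarrow> coef x w = coef y w)"

definition lowd :: "nat \<Rightarrow> ts \<Rightarrow> bool" where
  "lowd n x \<longleftrightarrow> (\<forall>w. length w < n \<longrightarrow> coef x w = 0)"

lemma eqk_refl[simp]: "eqk k x x" by (simp add: eqk_def)
lemma eqk_sym: "eqk k x y \<Longrightarrow> eqk k y x" by (simp add: eqk_def)
lemma eqk_trans: "eqk k x y \<Longrightarrow> eqk k y z \<Longrightarrow> eqk k x z" by (simp add: eqk_def)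
lemma eqk_add: "eqk k x y \<Longrightarrow> eqk k x' y' \<Longrightarrow> eqk k (x + x') (y + y')" by (simp add: eqk_def)
lemma eqk_diff: "eqk k x y \<Longrightarrow> eqk k x' y' \<Longrightarrow> eqk k (x - x') (y - y')" by (simp add: eqk_def)
lemma eqk_minus: "eqk k x y \<Longrightarrow> eqk k (- x) (- y)" by (simp add: eqk_def)
lemma eqk_scaleR: "eqk k x y \<Longrightarrow> eqk k (c *\<^sub>R x) (c *\<^sub>R y)" by (simp add: eqk_def)

lemma eqk_mult: "eqk k x y \<Longrightarrow> eqk k x' y' \<Longrightarrow> eqk k (x * x') (y * y')"
  unfolding eqk_def coef_mult by (auto intro!: sum.cong)

lemma eqk_power: "eqk k x y \<Longrightarrow> eqk k (x ^ n) (y ^ n)"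
  by (induction n) (auto intro: eqk_mult)

lemma eqk_mono: "eqk k x y \<Longrightarrow> j \<le> k \<Longrightarrow> eqk j x y" by (simp add: eqk_def)

lemma lowd_mult: "lowd i a \<Longrightarrow> lowd j b \<Longrightarrow> lowd (i + j) (a * b)"
  unfolding lowd_def coef_mult
proof (intro allI impI sum.neutral ballI)
  fix w :: "nat list" and l
  assume a: "\<forall>w. length w < i \<longrightarrow> coef a w = 0" and b: "\<forall>w. length w < j \<longrightarrow> coef b w = 0"
    and w: "length w < i + j" and l: "l \<in> {..length w}"
  show "coef a (take l w) * coef b (drop l w) = 0"
  proof (cases "length (take l w) < i")
    case True then show ?thesis using a by simp
  next
    case False then show ?thesis using b w l by simp
  qed
qed

lemma lowd_mono: "lowd n x \<Longrightarrow> m \<le> n \<Longrightarrow> lowd m x" by (simp add: lowd_def)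
lemma lowd_add: "lowd n x \<Longrightarrow> lowd n y \<Longrightarrow> lowd n (x + y)" by (simp add: lowd_def)
lemma lowd_diff: "lowd n x \<Longrightarrow> lowd n y \<Longrightarrow> lowd n (x - y)" by (simp add: lowd_def)
lemma lowd_minus: "lowd n x \<Longrightarrow> lowd n (- x)" by (simp add: lowd_def)
lemma lowd_scaleR: "lowd n x \<Longrightarrow> lowd n (c *\<^sub>R x)" by (simp add: lowd_def)
lemma lowd_0[simp]: "lowd n 0" by (simp add: lowd_def)
lemma lowd_sum: "(\<And>i. i \<in> A \<Longrightarrow> lowd n (f i)) \<Longrightarrow> lowd n (\<Sum>i\<in>A. f i)"
  by (simp add: lowd_def coef_sum)
lemma lowd1_iff: "lowd (Suc 0) x \<longleftrightarrow> coef x [] = 0" by (simp add: lowd_def)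

lemma lowd_power: "lowd 1 z \<Longrightarrow> lowd n (z ^ n)"
proof (induction n)
  case 0 then show ?case by (simp add: lowd_def)
next
  case (Suc n)
  then have "lowd (n + 1) (z ^ n * z)" by (intro lowd_mult) auto
  then show ?case by (simp only: power_Suc2) simp
qed

lemma power_coef_zero: "lowd 1 z \<Longrightarrow> length w < n \<Longrightarrow> coef (z ^ n) w = 0"
  using lowd_power[of z n] by (simp add: lowd_def)

definition evs :: "(nat \<Rightarrow> real) \<Rightarrow> ts \<Rightarrow> ts" where
  "evs c y = TS (\<lambda>w. \<Sum>n\<le>length w. c n * coef (y ^ n) w)"

lemma coef_evs: "coef (evs c y) w = (\<Sum>n\<le>length w. c n * coef (y ^ n) w)"
  by (simp add: evs_def)

lemma coef_evs_N: assumes "lowd 1 y" "length w \<le> N"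
  shows "coef (evs c y) w = (\<Sum>n\<le>N. c n * coef (y ^ n) w)"
  unfolding coef_evs
  by (rule sum.mono_neutral_left) (use assms power_coef_zero in auto)

lemma eqk_evs: "eqk k y y' \<Longrightarrow> eqk k (evs c y) (evs c y')"
  unfolding eqk_def coef_evs using eqk_power[of k y y'] by (auto simp: eqk_def intro!: sum.cong)

lemma evs_cong: "(\<And>n. c n = c' n) \<Longrightarrow> evs c y = evs c' y" by (simp add: evs_def)

abbreviation evf :: "real fps \<Rightarrow> ts \<Rightarrow> ts" where "evf p \<equiv> evs (fps_nth p)"

lemma evs_lowd1: "c 0 = 0 \<Longrightarrow> lowd 1 (evs c y)"
  by (simp add: lowd_def coef_evs)

lemma evf_add: "evf (p + q) y = evf p y + evf q y"
  by (rule ts_eqI) (simp add: coef_evs sum.distrib algebra_simps)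
lemma evf_diff: "evf (p - q) y = evf p y - evf q y"
  by (rule ts_eqI) (simp add: coef_evs sum_subtractf algebra_simps)
lemma evf_const_mult: "evf (fps_const c * p) y = c *\<^sub>R evf p y"
  by (rule ts_eqI) (simp add: coef_evs sum_distrib_left algebra_simps)
lemma evf_1: "evf 1 y = 1"
proof (rule ts_eqI)
  fix w
  have "coef (evf 1 y) w = (\<Sum>n\<in>{0}. (1::real fps) $ n * coef (y ^ n) w)"
    unfolding coef_evs by (rule sum.mono_neutral_right) auto
  then show "coef (evf 1 y) w = coef 1 w" by simp
qed
lemma evf_X: assumes "lowd 1 y" shows "evf fps_X y = y"
proof (rule ts_eqI)
  fix w
  have "coef (evf fps_X y) w = (\<Sum>n\<le>Suc (length w). (fps_X::real fps) $ n * coef (y ^ n) w)"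
    by (rule coef_evs_N[OF assms]) simp
  also have "\<dots> = (\<Sum>n\<in>{1}. (fps_X::real fps) $ n * coef (y ^ n) w)"
    by (rule sum.mono_neutral_right) (auto simp: fps_X_def)
  finally have "coef (evf fps_X y) w = (\<Sum>n\<in>{1}. (fps_X::real fps) $ n * coef (y ^ n) w)" .
  then show "coef (evf fps_X y) w = coef y w" by (simp add: fps_X_def)
qed

lemma evf_mult: assumes y: "lowd 1 y"
  shows "evf (p * q) y = evf p y * evf q y"
proof (rule ts_eqI)
  fix w :: "nat list"
  let ?N = "length w"
  define g where "g a b = p $ a * q $ b * coef (y ^ (a + b)) w" for a b
  have "coef (evf p y * evf q y) w =
      (\<Sum>i\<le>?N. (\<Sum>a\<le>?N. p$a * coef (y^a) (take i w)) * (\<Sum>b\<le>?N. q$b * coef (y^b) (drop i w)))"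
    unfolding coef_mult by (intro sum.cong refl, subst coef_evs_N[OF y, where N="?N"], simp,
        subst coef_evs_N[OF y, where N="?N"], simp_all)
  also have "\<dots> = (\<Sum>i\<le>?N. \<Sum>a\<le>?N. \<Sum>b\<le>?N. (p$a * coef (y^a) (take i w)) * (q$b * coef (y^b) (drop i w)))"
    by (simp only: sum_product)
  also have "\<dots> = (\<Sum>a\<le>?N. \<Sum>i\<le>?N. \<Sum>b\<le>?N. (p$a * coef (y^a) (take i w)) * (q$b * coef (y^b) (drop i w)))"
    by (rule sum.swap)
  also have "\<dots> = (\<Sum>a\<le>?N. \<Sum>b\<le>?N. \<Sum>i\<le>?N. (p$a * coef (y^a) (take i w)) * (q$b * coef (y^b) (drop i w)))"
    by (intro sum.cong refl sum.swap)
  also have "\<dots> = (\<Sum>a\<le>?N. \<Sum>b\<le>?N. p$a * q$b * coef (y^a * y^b) w)"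
    by (simp only: coef_mult sum_distrib_left mult_ac)
  also have "\<dots> = (\<Sum>(a,b)\<in>Sigma {..?N} (\<lambda>_. {..?N}). g a b)"
    by (simp add: sum.Sigma g_def power_add)
  also have "\<dots> = (\<Sum>(a,b)\<in>{(a,b). a + b \<le> ?N}. g a b)"
    by (rule sum.mono_neutral_right) (auto simp: g_def, metis not_le power_coef_zero[OF y])
  also have "\<dots> = (\<Sum>n\<le>?N. \<Sum>a\<le>n. g a (n - a))"
    by (rule sum.triangle_reindex_eq)
  also have "\<dots> = coef (evf (p * q) y) w"
    unfolding coef_evs g_def fps_mult_nth
    by (auto simp: sum_distrib_right atLeast0AtMost intro!: sum.cong)
  finally show "coef (evf (p * q) y) w = coef (evf p y * evf q y) w" by simp
qed

lemma evf_power: "lowd 1 y \<Longrightarrow> evf (q ^ i) y = evf q y ^ i"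
  by (induction i) (simp_all add: evf_1 evf_mult)

lemma evf_compose: assumes y: "lowd 1 y" and q0: "q $ 0 = 0"
  shows "evf (p oo q) y = evf p (evf q y)"
proof (rule ts_eqI)
  fix w :: "nat list"
  let ?N = "length w"
  have lq: "lowd 1 (evf q y)" by (rule evs_lowd1) (simp add: q0)
  have "coef (evf p (evf q y)) w = (\<Sum>i\<le>?N. p$i * coef (evf (q^i) y) w)"
    unfolding coef_evs evf_power[OF y] ..
  also have "\<dots> = (\<Sum>i\<le>?N. \<Sum>n\<le>?N. p$i * ((q^i)$n * coef (y^n) w))"
    by (simp add: coef_evs sum_distrib_left)
  also have "\<dots> = (\<Sum>n\<le>?N. \<Sum>i\<le>?N. p$i * ((q^i)$n * coef (y^n) w))"
    by (rule sum.swap)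
  also have "\<dots> = (\<Sum>n\<le>?N. \<Sum>i\<le>n. p$i * ((q^i)$n * coef (y^n) w))"
  proof (rule sum.cong[OF refl])
    fix n assume "n \<in> {..?N}"
    then show "(\<Sum>i\<le>?N. p$i * ((q^i)$n * coef (y^n) w)) = (\<Sum>i\<le>n. p$i * ((q^i)$n * coef (y^n) w))"
      by (intro sum.mono_neutral_right) (auto simp: startsby_zero_power_prefix[OF q0])
  qed
  also have "\<dots> = coef (evf (p oo q) y) w"
    by (simp add: coef_evs fps_compose_nth sum_distrib_left sum_distrib_right atLeast0AtMost mult_ac)
  finally show "coef (evf (p oo q) y) w = coef (evf p (evf q y)) w" ..
qed



fun shuf :: "nat list \<Rightarrow> nat list \<Rightarrow> nat list list" where
  "shuf [] v = [v]"
| "shuf (a#u) [] = [a#u]"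
| "shuf (a#u) (b#v) = map ((#) a) (shuf u (b#v)) @ map ((#) b) (shuf (a#u) v)"

lemma shuf_Nil2[simp]: "shuf u [] = [u]" by (cases u) auto

lemma shuf_length: "w \<in> set (shuf u v) \<Longrightarrow> length w = length u + length v"
  by (induction u v arbitrary: w rule: shuf.induct) auto

lemma shuf_set: "w \<in> set (shuf u v) \<Longrightarrow> set w = set u \<union> set v"
  by (induction u v arbitrary: w rule: shuf.induct) auto

lemma shuf_gen: "shuf p q = (if p = [] \<and> q = [] then [[]] else
   (case p of [] \<Rightarrow> [] | a#p' \<Rightarrow> map ((#) a) (shuf p' q)) @
   (case q of [] \<Rightarrow> [] | b#q' \<Rightarrow> map ((#) b) (shuf p q')))"
  by (cases p; cases q) auto

lemma sum_list_mult_sum_list: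
  "(\<Sum>x\<leftarrow>xs. f x) * (\<Sum>y\<leftarrow>ys. g y) = (\<Sum>x\<leftarrow>xs. \<Sum>y\<leftarrow>ys. (f x * g y :: real))"
  by (induction xs) (simp_all add: distrib_right sum_list_const_mult)

lemma sum_atMost_Suc_if:
  "(\<Sum>i\<le>Suc m. (if 0 < i then f (i - 1) else (0::real))) = (\<Sum>i\<le>m. f i)"
  by (subst sum.atMost_Suc_shift) simp

lemma shuf_split:
  "(\<Sum>w\<leftarrow>shuf u v. \<Sum>i\<le>length w. F (take i w) (drop i w)) =
   (\<Sum>i\<le>length u. \<Sum>j\<le>length v. \<Sum>w1\<leftarrow>shuf (take i u) (take j v).
        \<Sum>w2\<leftarrow>shuf (drop i u) (drop j v). (F w1 w2 :: real))"
proof (induction u v arbitrary: F rule: shuf.induct)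
  case (1 v) then show ?case by simp
next
  case (2 a u) then show ?case by simp
next
  case (3 a u b v)
  define Ta where "Ta i j = (\<Sum>w1\<leftarrow>shuf (take i u) (take j (b#v)).
        \<Sum>w2\<leftarrow>shuf (drop i u) (drop j (b#v)). F (a#w1) w2)" for i j
  define Tb where "Tb i j = (\<Sum>w1\<leftarrow>shuf (take i (a#u)) (take j v).
        \<Sum>w2\<leftarrow>shuf (drop i (a#u)) (drop j v). F (b#w1) w2)" for i j
  define T0 where "T0 = (\<Sum>w\<leftarrow>shuf (a#u) (b#v). F [] w)"
  have IH1: "(\<Sum>w\<leftarrow>shuf u (b#v). \<Sum>i\<le>length w. F (a # take i w) (drop i w)) =
      (\<Sum>i\<le>length u. \<Sum>j\<le>Suc (length v). Ta i j)"
    using "3.IH"(1)[of "\<lambda>x y. F (a#x) y"] by (simp add: Ta_def)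
  have IH2: "(\<Sum>w\<leftarrow>shuf (a#u) v. \<Sum>i\<le>length w. F (b # take i w) (drop i w)) =
      (\<Sum>i\<le>Suc (length u). \<Sum>j\<le>length v. Tb i j)"
    using "3.IH"(2)[of "\<lambda>x y. F (b#x) y"] by (simp add: Tb_def)
  have cons: "(\<Sum>i\<le>length (c#w). F (take i (c#w)) (drop i (c#w))) =
      F [] (c#w) + (\<Sum>i\<le>length w. F (c # take i w) (drop i w))" for c w
    by (simp add: sum.atMost_Suc_shift del: sum.atMost_Suc)
  have L: "(\<Sum>w\<leftarrow>shuf (a#u) (b#v). \<Sum>i\<le>length w. F (take i w) (drop i w)) =
     T0 + (\<Sum>i\<le>length u. \<Sum>j\<le>Suc (length v). Ta i j) + (\<Sum>i\<le>Suc (length u). \<Sum>j\<le>length v. Tb i j)"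
  proof -
    have L1: "(\<Sum>w\<leftarrow>shuf (a#u) (b#v). G w) = (\<Sum>w\<leftarrow>shuf u (b#v). G (a#w)) + (\<Sum>w\<leftarrow>shuf (a#u) v. G (b#w))"
      for G :: "nat list \<Rightarrow> real" by (simp add: o_def)
    show ?thesis
      unfolding L1 cons sum_list_addf IH1 IH2 T0_def L1[of "F []"] by simp
  qed
  have T: "(\<Sum>w1\<leftarrow>shuf (take i (a#u)) (take j (b#v)). \<Sum>w2\<leftarrow>shuf (drop i (a#u)) (drop j (b#v)). F w1 w2)
     = (if i = 0 \<and> j = 0 then T0 else 0) + (if 0 < i then Ta (i - 1) j else 0) + (if 0 < j then Tb i (j - 1) else 0)" for i j
    by (cases i; cases j) (simp_all add: T0_def Ta_def Tb_def o_def)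
  have "(\<Sum>i\<le>length (a#u). \<Sum>j\<le>length (b#v). \<Sum>w1\<leftarrow>shuf (take i (a#u)) (take j (b#v)).
        \<Sum>w2\<leftarrow>shuf (drop i (a#u)) (drop j (b#v)). F w1 w2) =
      (\<Sum>i\<le>Suc (length u). \<Sum>j\<le>Suc (length v). (if i = 0 \<and> j = 0 then T0 else 0)) +
      (\<Sum>i\<le>Suc (length u). \<Sum>j\<le>Suc (length v). (if 0 < i then Ta (i - 1) j else 0)) +
      (\<Sum>i\<le>Suc (length u). \<Sum>j\<le>Suc (length v). (if 0 < j then Tb i (j - 1) else 0))"
    by (simp only: T length_Cons sum.distrib)
  also have "\<dots> = T0 + (\<Sum>i\<le>length u. \<Sum>j\<le>Suc (length v). Ta i j) + (\<Sum>i\<le>Suc (length u). \<Sum>j\<le>length v. Tb i j)"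
  proof -
    have 1: "(\<Sum>i\<le>Suc (length u). \<Sum>j\<le>Suc (length v). (if i = 0 \<and> j = 0 then T0 else 0)) = T0"
      by (simp add: sum.atMost_Suc_shift del: sum.atMost_Suc)
    have 2: "(\<Sum>i\<le>Suc (length u). \<Sum>j\<le>Suc (length v). (if 0 < i then Ta (i - 1) j else 0)) =
        (\<Sum>i\<le>length u. \<Sum>j\<le>Suc (length v). Ta i j)"
      by (subst sum.atMost_Suc_shift) simp
    have 3: "(\<Sum>i\<le>Suc (length u). \<Sum>j\<le>Suc (length v). (if 0 < j then Tb i (j - 1) else 0)) =
        (\<Sum>i\<le>Suc (length u). \<Sum>j\<le>length v. Tb i j)"
      by (rule sum.cong[OF refl], subst sum.atMost_Suc_shift) simp
    show ?thesis by (simp only: 1 2 3)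
  qed
  finally show ?case using L by simp
qed

definition shf :: "(nat list \<Rightarrow> real) \<Rightarrow> nat list \<Rightarrow> nat list \<Rightarrow> real" where
  "shf f u v = (\<Sum>w\<leftarrow>shuf u v. f w)"

lemma shf_Nil1[simp]: "shf f [] v = f v" and shf_Nil2[simp]: "shf f u [] = f u"
  by (simp_all add: shf_def)

lemma shf_mult: "shf (coef (x * y)) u v =
   (\<Sum>i\<le>length u. \<Sum>j\<le>length v. shf (coef x) (take i u) (take j v) * shf (coef y) (drop i u) (drop j v))"
  using shuf_split[of "\<lambda>a b. coef x a * coef y b" u v]
  by (simp add: shf_def coef_mult sum_list_mult_sum_list)

lemma shf_cong: "(\<And>w. length w = length u + length v \<Longrightarrow> f w = g w) \<Longrightarrow> shf f u v = shf g u v"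
  unfolding shf_def by (intro arg_cong[where f=sum_list] map_cong refl) (auto dest: shuf_length)

lemma shf_add: "shf (\<lambda>w. f w + g w) u v = shf f u v + shf g u v"
  by (simp add: shf_def sum_list_addf)
lemma shf_diff: "shf (\<lambda>w. f w - g w) u v = shf f u v - shf g u v"
  by (simp add: shf_def sum_list_subtractf)
lemma shf_scale: "shf (\<lambda>w. c * f w) u v = c * shf f u v"
  by (simp add: shf_def sum_list_const_mult)
lemma shf_zero: "shf (\<lambda>w. 0) u v = 0"
  by (simp add: shf_def)
lemma shf_sum: "finite A \<Longrightarrow> shf (\<lambda>w. \<Sum>n\<in>A. F n w) u v = (\<Sum>n\<in>A. shf (F n) u v)"
  by (induction A rule: finite_induct) (simp_all add: shf_zero shf_add)

lemma shf_one: "shf (coef 1) u v = (if u = [] \<and> v = [] then 1 else 0)"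
proof -
  have "shf (coef 1) u v = shf (\<lambda>w. if length u + length v = 0 then coef 1 w else 0) u v"
    by (rule shf_cong) auto
  then show ?thesis by (auto simp: shf_def)
qed




lemma coef_fun:
  "coef (x + y) = (\<lambda>w. coef x w + coef y w)" "coef (x - y) = (\<lambda>w. coef x w - coef y w)"
  "coef (- x) = (\<lambda>w. - coef x w)" "coef (c *\<^sub>R x) = (\<lambda>w. c * coef x w)" "coef 0 = (\<lambda>w. 0)"
  by (simp_all add: fun_eq_iff)

definition Exp :: "ts \<Rightarrow> ts" where "Exp z = evf (fps_exp 1) z"
definition Log :: "ts \<Rightarrow> ts" where "Log x = evf (fps_ln 1) (x - 1)"

definition prim :: "ts \<Rightarrow> bool" where
  "prim x \<longleftrightarrow> coef x [] = 0 \<and> (\<forall>u v. u \<noteq> [] \<longrightarrow> v \<noteq> [] \<longrightarrow> shf (coef x) u v = 0)"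
definition gl :: "ts \<Rightarrow> bool" where
  "gl x \<longleftrightarrow> coef x [] = 1 \<and> (\<forall>u v. shf (coef x) u v = coef x u * coef x v)"

lemma coef_Exp: "coef (Exp z) w = (\<Sum>n\<le>length w. coef (z ^ n) w / fact n)"
  by (simp add: Exp_def coef_evs fps_exp_def)

lemma coef_Exp_N: "lowd 1 z \<Longrightarrow> length w \<le> N \<Longrightarrow> coef (Exp z) w = (\<Sum>n\<le>N. coef (z ^ n) w / fact n)"
  unfolding Exp_def by (subst coef_evs_N[where N=N]) (simp_all add: fps_exp_def)

lemma coef_Exp_Nil[simp]: "coef (Exp z) [] = 1"
  by (simp add: coef_Exp)

lemma coef_Log_Nil[simp]: "coef (Log z) [] = 0"
  by (simp add: Log_def coef_evs)

lemma lowd1_Log: "lowd 1 (Log x)" by (simp add: lowd_def)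

lemma lowd1_minus1: "coef x [] = 1 \<Longrightarrow> lowd 1 (x - 1)" by (simp add: lowd_def)

lemma Exp_minus1: "Exp z - 1 = evf (fps_exp 1 - 1) z"
  by (simp add: Exp_def evf_diff evf_1)

lemma Log_Exp: assumes "lowd 1 z" shows "Log (Exp z) = z"
proof -
  have "Log (Exp z) = evf (fps_ln 1) (evf (fps_exp 1 - 1) z)"
    by (simp add: Log_def Exp_minus1)
  also have "\<dots> = evf (fps_ln 1 oo (fps_exp 1 - 1)) z"
    by (rule evf_compose[symmetric]) (use assms in simp_all)
  also have "fps_ln 1 oo (fps_exp 1 - 1) = (fps_X :: real fps)"
    using fps_ln_fps_exp_inv[of "1::real"] fps_inv_fps_exp_compose(1)[of "1::real"] by simp
  finally show ?thesis by (rule trans[OF _ evf_X[OF assms]])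
qed

lemma Exp_Log: assumes "coef x [] = 1" shows "Exp (Log x) = x"
proof -
  have l: "lowd 1 (x - 1)" using assms by (rule lowd1_minus1)
  have "Exp (Log x) - 1 = evf (fps_exp 1 - 1) (evf (fps_ln 1) (x - 1))"
    by (simp add: Log_def Exp_minus1)
  also have "\<dots> = evf ((fps_exp 1 - 1) oo fps_ln 1) (x - 1)"
    by (rule evf_compose[symmetric]) (use l in simp_all)
  also have "(fps_exp 1 - 1) oo fps_ln 1 = (fps_X :: real fps)"
    using fps_ln_fps_exp_inv[of "1::real"] fps_inv_fps_exp_compose(2)[of "1::real"] by simp
  finally have "Exp (Log x) - 1 = x - 1" by (rule trans[OF _ evf_X[OF l]])
  then show ?thesis by simp
qed

lemma scaleR_power_ts: "(s *\<^sub>R (z::ts)) ^ n = (s ^ n) *\<^sub>R z ^ n"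
  by (induction n) (simp_all add: mult.commute)

lemma Exp_scale: "Exp (s *\<^sub>R z) = evf (fps_exp s) z"
  by (rule ts_eqI) (simp add: Exp_def coef_evs fps_exp_def scaleR_power_ts)

lemma Exp_add_scale: assumes "lowd 1 z"
  shows "Exp (s *\<^sub>R z) * Exp (t *\<^sub>R z) = Exp ((s + t) *\<^sub>R z)"
  by (simp add: Exp_scale evf_mult[OF assms, symmetric] fps_exp_add_mult)

lemma Exp_zero: "Exp 0 = 1"
  using Exp_scale[of 0 0] by (simp add: evf_1)

lemma Exp_inv: assumes "lowd 1 z" shows "Exp (- z) * Exp z = 1" "Exp z * Exp (- z) = 1"
  using Exp_add_scale[OF assms, of "-1" 1] Exp_add_scale[OF assms, of 1 "-1"]
  by (simp_all add: Exp_zero)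

lemma Exp_double: assumes "lowd 1 z" shows "Exp z * Exp z = Exp (2 *\<^sub>R z)"
  using Exp_add_scale[OF assms, of 1 1] by simp

lemma eqk_Exp: "eqk k y y' \<Longrightarrow> eqk k (Exp y) (Exp y')"
  unfolding Exp_def by (rule eqk_evs)

lemma eqk_Log: "eqk k y y' \<Longrightarrow> eqk k (Log y) (Log y')"
  unfolding Log_def by (intro eqk_evs eqk_diff) auto

lemma prim_lowd: "prim x \<Longrightarrow> lowd 1 x" by (simp add: prim_def lowd_def)

lemma prim_shf: assumes "prim x"
  shows "shf (coef x) u v = (if u = [] then coef x v else 0) + (if v = [] then coef x u else 0)"
  using assms by (cases "u = []"; cases "v = []") (auto simp: prim_def)

lemma prim_add: "prim x \<Longrightarrow> prim y \<Longrightarrow> prim (x + y)"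
  by (simp add: prim_def coef_fun shf_add)
lemma prim_diff: "prim x \<Longrightarrow> prim y \<Longrightarrow> prim (x - y)"
  by (simp add: prim_def coef_fun shf_diff)
lemma prim_scaleR: "prim x \<Longrightarrow> prim (c *\<^sub>R x)"
  by (simp add: prim_def coef_fun shf_scale)
lemma prim_uminus: "prim x \<Longrightarrow> prim (- x)"
  using prim_scaleR[of x "-1"] by simp
lemma prim_zero: "prim 0"
  by (simp add: prim_def coef_fun shf_zero)

lemma sum_box_two:
  fixes A B C D :: "nat \<Rightarrow> real"
  assumes "0 < m" "0 < n"
  shows "(\<Sum>i\<le>m. \<Sum>j\<le>n. ((if i = 0 then A j else 0) + (if j = 0 then B i else 0)) *
       ((if i = m then C j else 0) + (if j = n then D i else 0))) = A n * D 0 + B m * C 0"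
proof -
  have "(\<Sum>i\<le>m. \<Sum>j\<le>n. ((if i = 0 then A j else 0) + (if j = 0 then B i else 0)) *
       ((if i = m then C j else 0) + (if j = n then D i else 0))) =
     (\<Sum>i\<le>m. \<Sum>j\<le>n. (if i = 0 then (if j = n then A n * D 0 else 0) else 0) +
        (if i = m then (if j = 0 then B m * C 0 else 0) else 0))"
    using assms by (intro sum.cong refl) auto
  also have "\<dots> = A n * D 0 + B m * C 0"
  proof -
    have e: "(\<Sum>i\<le>m. \<Sum>j\<le>n. if i = a then (if j = b then X else 0) else 0) = X"
      if "a \<le> m" "b \<le> n" for a b and X :: real
    proof -
      have "(\<Sum>j\<le>n. if i = a then (if j = b then X else 0) else 0) = (if i = a then X else 0)" for i
        using that by (cases "i = a") simp_all
      then show ?thesis using that by simp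
    qed
    show ?thesis by (simp only: sum.distrib e assms order_refl le0)
  qed
  finally show ?thesis .
qed

lemma prim_bracket: assumes x: "prim x" and y: "prim y" shows "prim (x * y - y * x)"
proof -
  have key: "shf (coef (a * b)) u v = coef a v * coef b u + coef a u * coef b v"
    if a: "prim a" and b: "prim b" and u: "u \<noteq> []" and v: "v \<noteq> []" for a b u v
  proof -
    have "shf (coef (a * b)) u v = (\<Sum>i\<le>length u. \<Sum>j\<le>length v.
       ((if i = 0 then coef a (take j v) else 0) + (if j = 0 then coef a (take i u) else 0)) *
       ((if i = length u then coef b (drop j v) else 0) + (if j = length v then coef b (drop i u) else 0)))"
      unfolding shf_mult using u v
      by (intro sum.cong refl) (auto simp: prim_shf[OF a] prim_shf[OF b])
    also have "\<dots> = coef a v * coef b u + coef a u * coef b v"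
      by (subst sum_box_two) (use u v in auto)
    finally show ?thesis .
  qed
  show ?thesis
    unfolding prim_def
  proof (intro conjI allI impI)
    show "coef (x * y - y * x) [] = 0" using x y by (simp add: prim_def coef_mult)
    fix u v :: "nat list" assume u: "u \<noteq> []" and v: "v \<noteq> []"
    show "shf (coef (x * y - y * x)) u v = 0"
      by (simp add: coef_fun shf_diff key[OF x y u v] key[OF y x u v])
  qed
qed

lemma gl_mult: assumes x: "gl x" and y: "gl y" shows "gl (x * y)"
  unfolding gl_def
proof (intro conjI allI)
  show "coef (x * y) [] = 1" using x y by (simp add: gl_def coef_mult)
  fix u v :: "nat list"
  have "shf (coef (x * y)) u v = (\<Sum>i\<le>length u. \<Sum>j\<le>length v.
     (coef x (take i u) * coef y (drop i u)) * (coef x (take j v) * coef y (drop j v)))"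
    unfolding shf_mult using x y by (intro sum.cong refl) (simp add: gl_def algebra_simps)
  also have "\<dots> = coef (x * y) u * coef (x * y) v"
    by (simp add: coef_mult sum_product)
  finally show "shf (coef (x * y)) u v = coef (x * y) u * coef (x * y) v" .
qed

lemma sum_two_deltas:
  fixes S :: "nat \<Rightarrow> nat \<Rightarrow> real"
  shows "(\<Sum>i\<le>m. \<Sum>j\<le>n. S i j * ((if i = m then f j else 0) + (if j = n then g i else 0))) =
     (\<Sum>j\<le>n. S m j * f j) + (\<Sum>i\<le>m. S i n * g i)"
proof -
  have "(\<Sum>i\<le>m. \<Sum>j\<le>n. S i j * ((if i = m then f j else 0) + (if j = n then g i else 0))) =
     (\<Sum>i\<le>m. (if i = m then (\<Sum>j\<le>n. S i j * f j) else 0) + S i n * g i)"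
  proof (rule sum.cong[OF refl])
    fix i assume "i \<in> {..m}"
    have "(\<Sum>j\<le>n. S i j * ((if i = m then f j else 0) + (if j = n then g i else 0))) =
       (\<Sum>j\<le>n. (if i = m then S i j * f j else 0) + (if j = n then S i n * g i else 0))"
      by (rule sum.cong) (auto simp: distrib_left)
    then show "(\<Sum>j\<le>n. S i j * ((if i = m then f j else 0) + (if j = n then g i else 0))) =
       (if i = m then (\<Sum>j\<le>n. S i j * f j) else 0) + S i n * g i"
      by (simp add: sum.distrib)
  qed
  also have "\<dots> = (\<Sum>j\<le>n. S m j * f j) + (\<Sum>i\<le>m. S i n * g i)"
    by (simp add: sum.distrib)
  finally show ?thesis .
qed

lemma gl_Exp: assumes z: "prim z" shows "gl (Exp z)"
proof -
  have lz: "lowd 1 z" using z by (rule prim_lowd)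
  define E where "E n = (1 / fact n) *\<^sub>R z ^ n" for n
  have cE: "coef (E n) w = coef (z ^ n) w / fact n" for n w by (simp add: E_def)
  have Ez: "coef (E m * z) w = real (Suc m) * coef (E (Suc m)) w" for m w
  proof -
    have "E m * z = (1 / fact m) *\<^sub>R z ^ Suc m" by (simp add: E_def power_commutes)
    moreover have "real (Suc m) * (1 / fact (Suc m)) = (1 / fact m :: real)"
    proof -
      have f: "(fact (Suc m)::real) = real (Suc m) * fact m" by simp
      show ?thesis unfolding f by (simp add: field_simps del: of_nat_Suc)
    qed
    ultimately show ?thesis by (simp add: E_def)
  qed
  have Ezero: "coef (E p) w = 0" if "length w < p" for p w
    using power_coef_zero[OF lz that] by (simp add: cE)
  have key: "shf (coef (E n)) u v = (\<Sum>p\<le>n. coef (E p) u * coef (E (n - p)) v)" for n u v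
  proof (induction n arbitrary: u v)
    case 0
    have "E 0 = 1" by (simp add: E_def)
    then show ?case by (simp only: shf_one) simp
  next
    case (Suc n)
    have ES: "E (Suc n) = (1 / real (Suc n)) *\<^sub>R (E n * z)"
      by (rule ts_eqI) (simp add: Ez)
    have "shf (coef (E n * z)) u v = (\<Sum>i\<le>length u. \<Sum>j\<le>length v.
        shf (coef (E n)) (take i u) (take j v) *
        ((if i = length u then coef z (drop j v) else 0) + (if j = length v then coef z (drop i u) else 0)))"
      unfolding shf_mult by (intro sum.cong refl) (auto simp: prim_shf[OF z])
    also have "\<dots> = (\<Sum>j\<le>length v. shf (coef (E n)) u (take j v) * coef z (drop j v)) +
        (\<Sum>i\<le>length u. shf (coef (E n)) (take i u) v * coef z (drop i u))"
      by (subst sum_two_deltas) simp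
    also have "\<dots> = (\<Sum>p\<le>n. coef (E p) u * coef (E (n - p) * z) v) +
        (\<Sum>p\<le>n. coef (E p * z) u * coef (E (n - p)) v)"
      by (simp add: Suc.IH coef_mult sum_distrib_left sum_distrib_right mult_ac sum.swap[of _ "{..n}"])
    also have "\<dots> = (\<Sum>p\<le>n. real (Suc n - p) * (coef (E p) u * coef (E (Suc n - p)) v)) +
        (\<Sum>p\<le>n. real (Suc p) * (coef (E (Suc p)) u * coef (E (Suc n - Suc p)) v))"
      by (intro arg_cong2[where f="(+)"] sum.cong refl) (simp_all add: Ez Suc_diff_le)
    also have "\<dots> = (\<Sum>p\<le>Suc n. real (Suc n - p) * (coef (E p) u * coef (E (Suc n - p)) v)) +
        (\<Sum>p\<le>Suc n. real p * (coef (E p) u * coef (E (Suc n - p)) v))"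
      by (simp only: sum.atMost_Suc_shift[of "\<lambda>p. real p * _ p"] sum.atMost_Suc) simp
    also have "\<dots> = real (Suc n) * (\<Sum>p\<le>Suc n. coef (E p) u * coef (E (Suc n - p)) v)"
      by (simp add: sum.distrib[symmetric] sum_distrib_left algebra_simps of_nat_diff
          del: of_nat_Suc sum.atMost_Suc)
    finally have "shf (coef (E n * z)) u v = real (Suc n) * (\<Sum>p\<le>Suc n. coef (E p) u * coef (E (Suc n - p)) v)" .
    then show ?case unfolding ES coef_fun shf_scale by simp
  qed
  show ?thesis unfolding gl_def
  proof (intro conjI allI)
    show "coef (Exp z) [] = 1" by simp
    fix u v :: "nat list"
    let ?N = "length u + length v"
    have "shf (coef (Exp z)) u v = shf (\<lambda>w. \<Sum>n\<le>?N. coef (E n) w) u v"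
      by (rule shf_cong) (simp add: coef_Exp cE)
    also have "\<dots> = (\<Sum>n\<le>?N. \<Sum>p\<le>n. coef (E p) u * coef (E (n - p)) v)"
      by (simp add: shf_sum key)
    also have "\<dots> = (\<Sum>(p,q)\<in>{(p,q). p + q \<le> ?N}. coef (E p) u * coef (E q) v)"
      by (rule sum.triangle_reindex_eq[symmetric])
    also have "\<dots> = (\<Sum>(p,q)\<in>{..length u} \<times> {..length v}. coef (E p) u * coef (E q) v)"
    proof -
      have fin: "finite {(p,q). p + q \<le> ?N}"
        by (rule finite_subset[of _ "{..?N} \<times> {..?N}"]) auto
      have Ez': "p \<le> length w" if "coef (E p) w \<noteq> 0" for p w
        using Ezero that by (meson not_le)
      show ?thesis by (rule sum.mono_neutral_right) (use fin in \<open>auto dest: Ez'\<close>)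
    qed
    also have "\<dots> = (\<Sum>p\<le>length u. coef (E p) u) * (\<Sum>q\<le>length v. coef (E q) v)"
      by (simp add: sum_product sum.cartesian_product)
    also have "\<dots> = coef (Exp z) u * coef (Exp z) v"
      by (simp add: coef_Exp cE)
    finally show "shf (coef (Exp z)) u v = coef (Exp z) u * coef (Exp z) v" .
  qed
qed

lemma lowd_eqk0: "lowd (Suc n) x \<Longrightarrow> eqk n x 0"
  by (simp add: lowd_def eqk_def)

lemma Exp_perturb: assumes p: "lowd 1 p" and h: "lowd n h" and n: "1 \<le> n"
  shows "eqk n (Exp (p + h)) (Exp p + h)"
proof -
  have pw: "eqk n ((p + h) ^ m) (p ^ m + (if m = 1 then h else 0))" for m
  proof (induction m)
    case 0 then show ?case by simp
  next
    case (Suc m)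
    have 1: "eqk n ((p + h) ^ Suc m) ((p ^ m + (if m = 1 then h else 0)) * (p + h))"
      unfolding power_Suc2 by (rule eqk_mult[OF Suc.IH eqk_refl])
    show ?case
    proof (cases "m = 0")
      case True then show ?thesis using 1 by simp
    next
      case False
      define dl where "dl = (if m = 1 then h else 0)"
      have ld: "lowd n dl" using h by (simp add: dl_def)
      have a: "lowd (Suc n) (p ^ m * h)"
        using lowd_mult[OF lowd_power[OF p, of m] h] False by (auto intro: lowd_mono)
      have b: "lowd (Suc n) (dl * p)"
        using lowd_mult[OF ld p] by simp
      have c: "lowd (Suc n) (dl * h)"
        using lowd_mult[OF ld h] n by (auto intro: lowd_mono)
      have "eqk n (p ^ m * h + dl * p + dl * h) 0"
        by (intro lowd_eqk0 lowd_add a b c)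
      then have "eqk n (p ^ Suc m + (p ^ m * h + dl * p + dl * h)) (p ^ Suc m + 0)"
        by (intro eqk_add) auto
      moreover have "(p ^ m + dl) * (p + h) = p ^ Suc m + (p ^ m * h + dl * p + dl * h)"
        by (simp add: algebra_simps power_commutes)
      ultimately show ?thesis using 1 False by (auto simp: dl_def intro: eqk_trans)
    qed
  qed
  have ph: "lowd 1 (p + h)" using p h n by (auto intro: lowd_add lowd_mono)
  show ?thesis unfolding eqk_def
  proof (intro allI impI)
    fix w :: "nat list" assume w: "length w \<le> n"
    have "coef (Exp (p + h)) w = (\<Sum>m\<le>n. coef ((p + h) ^ m) w / fact m)"
      by (rule coef_Exp_N[OF ph w])
    also have "\<dots> = (\<Sum>m\<le>n. coef (p ^ m) w / fact m + (if m = 1 then coef h w else 0))"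
      using pw w by (intro sum.cong refl) (auto simp: eqk_def add_divide_distrib)
    also have "\<dots> = coef (Exp p) w + coef h w"
      using n by (simp add: sum.distrib coef_Exp_N[OF p w])
    finally show "coef (Exp (p + h)) w = coef (Exp p + h) w" by simp
  qed
qed

lemma gl_Log: assumes x: "gl x" shows "prim (Log x)"
proof -
  define z where "z = Log x"
  have x1: "coef x [] = 1" using x by (simp add: gl_def)
  have xz: "Exp z = x" unfolding z_def by (rule Exp_Log[OF x1])
  have lz: "lowd 1 z" unfolding z_def by (rule lowd1_Log)
  have step: "\<exists>p. prim p \<and> eqk n z p" for n
  proof (induction n)
    case 0
    show ?case by (intro exI[of _ 0]) (use lz in \<open>auto simp: prim_zero eqk_def lowd_def\<close>)
  next
    case (Suc n)
    then obtain p where p: "prim p" and zp: "eqk n z p" by blast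
    define h where "h = z - p"
    have lh: "lowd (Suc n) h" using zp by (auto simp: lowd_def eqk_def h_def)
    have lp: "lowd 1 p" using p by (rule prim_lowd)
    have shfh: "shf (coef h) u v = 0"
      if u: "u \<noteq> []" and v: "v \<noteq> []" and uv: "length u + length v = Suc n" for u v
    proof -
      have e: "eqk (Suc n) x (Exp p + h)"
        using Exp_perturb[OF lp lh] xz by (simp add: h_def)
      have "shf (coef x) u v = shf (coef (Exp p + h)) u v"
        by (rule shf_cong) (use e uv in \<open>auto simp: eqk_def\<close>)
      also have "\<dots> = coef (Exp p) u * coef (Exp p) v + shf (coef h) u v"
        using gl_Exp[OF p] by (simp add: coef_fun shf_add gl_def)
      finally have 1: "shf (coef x) u v = coef (Exp p) u * coef (Exp p) v + shf (coef h) u v" .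
      have lu: "length u \<le> Suc n" "length v \<le> Suc n" "length u < Suc n" "length v < Suc n"
        using uv u v by (auto simp: neq_Nil_conv)
      have "coef x u = coef (Exp p) u" "coef x v = coef (Exp p) v"
        using e lu lh by (auto simp: eqk_def lowd_def)
      then show ?thesis using 1 x by (simp add: gl_def)
    qed
    define H where "H = TS (\<lambda>w. if length w = Suc n then coef h w else 0)"
    have shfH: "shf (coef H) u v = (if length u + length v = Suc n then shf (coef h) u v else 0)" for u v
    proof -
      have "shf (coef H) u v = shf (\<lambda>w. if length u + length v = Suc n then coef h w else 0) u v"
        by (rule shf_cong) (simp add: H_def)
      then show ?thesis by (simp add: shf_def)
    qed
    have "coef H [] = 0" by (simp add: H_def)
    then have "prim H" unfolding prim_def using shfh by (auto simp: shfH)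
    then have "prim (p + H)" using p by (rule prim_add[rotated])
    moreover have "eqk (Suc n) z (p + H)"
      using zp by (auto simp: eqk_def H_def h_def le_Suc_eq)
    ultimately show ?case by blast
  qed
  show ?thesis unfolding z_def[symmetric] prim_def
  proof (intro conjI allI impI)
    show "coef z [] = 0" using lz by (simp add: lowd_def)
    fix u v :: "nat list" assume "u \<noteq> []" "v \<noteq> []"
    obtain p where p: "prim p" and zp: "eqk (length u + length v) z p" using step by blast
    have "shf (coef z) u v = shf (coef p) u v"
      by (rule shf_cong) (use zp in \<open>auto simp: eqk_def\<close>)
    then show "shf (coef z) u v = 0" using p \<open>u \<noteq> []\<close> \<open>v \<noteq> []\<close> by (simp add: prim_def)
  qed
qed



lemma count_map_Cons: "count_list (map ((#) a) xs) (c # w) = (if a = c then count_list xs w else 0)"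
  by (induction xs) auto

lemma count_map_Cons_Nil: "count_list (map ((#) a) xs) [] = 0"
  by (induction xs) auto

lemma cnt_Nil: "count_list (shuf p q) [] = (if p = [] \<and> q = [] then 1 else 0)"
  by (cases p; cases q) (auto simp: count_map_Cons_Nil)

lemma cnt_Cons: "count_list (shuf p q) (c # w) =
   (if p \<noteq> [] \<and> hd p = c then count_list (shuf (tl p) q) w else 0) +
   (if q \<noteq> [] \<and> hd q = c then count_list (shuf p (tl q)) w else 0)"
  by (cases p; cases q) (auto simp: count_map_Cons)

lemma mset_shuf_snoc: "mset (shuf p q) = (if p = [] \<and> q = [] then {#[]#} else {#}) +
   (if p = [] then {#} else image_mset (\<lambda>w. w @ [last p]) (mset (shuf (butlast p) q))) +
   (if q = [] then {#} else image_mset (\<lambda>w. w @ [last q]) (mset (shuf p (butlast q))))"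
proof (induction p q rule: shuf.induct)
  case (1 v) then show ?case by (cases v rule: rev_cases) auto
next
  case (2 a u) then show ?case by (cases u rule: rev_cases) auto
next
  case (3 a u b v)
  show ?case
  proof (cases "u = []"; cases "v = []")
    assume u: "u = []" and v: "v = []"
    show ?thesis using u v by (simp add: add_ac)
  next
    assume u: "u = []" and v: "v \<noteq> []"
    show ?thesis using u v 3 by (simp add: multiset.map_comp o_def add_ac)
  next
    assume u: "u \<noteq> []" and v: "v = []"
    show ?thesis using u v 3 by (simp add: multiset.map_comp o_def add_ac)
  next
    assume u: "u \<noteq> []" and v: "v \<noteq> []"
    show ?thesis using u v 3 by (simp add: multiset.map_comp o_def add_ac)
  qed
qed

lemma count_img_snoc: "count (image_mset (\<lambda>w. w @ [a]) M) (x @ [c]) = (if a = c then count M x else 0)"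
proof -
  have "(\<lambda>w. w @ [a]) -` {x @ [c]} = (if a = c then {x} else {})" by auto
  then show ?thesis by (cases "x \<in># M") (auto simp: count_image_mset not_in_iff)
qed

lemma count_img_snoc_Nil: "count (image_mset (\<lambda>w. w @ [a]) M) [] = 0"
proof -
  have "(\<lambda>w. w @ [a]) -` {[]} = {}" by auto
  then show ?thesis by (simp add: count_image_mset)
qed

lemma cnt_snoc: "count_list (shuf p q) (w @ [c]) =
   (if p \<noteq> [] \<and> last p = c then count_list (shuf (butlast p) q) w else 0) +
   (if q \<noteq> [] \<and> last q = c then count_list (shuf p (butlast q)) w else 0)"
  by (subst count_mset[symmetric], subst mset_shuf_snoc) (simp add: count_img_snoc count_mset)

lemma cnt_length: "count_list (shuf p q) w \<noteq> 0 \<Longrightarrow> length w = length p + length q"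
  by (meson count_list_0_iff shuf_length)

definition Eg :: "nat \<Rightarrow> ts" where "Eg a = TS (\<lambda>w. if w = [a] then 1 else 0)"

fun rr :: "nat list \<Rightarrow> ts" where
  "rr [] = 0"
| "rr (a # u) = (if u = [] then Eg a else rr u * Eg a - Eg a * rr u)"

lemma coef_mult_Eg_right: "coef (x * Eg a) w = (if w \<noteq> [] \<and> last w = a then coef x (butlast w) else 0)"
proof (cases w rule: rev_cases)
  case Nil then show ?thesis by (simp add: coef_mult Eg_def)
next
  case (snoc w' b)
  have "coef (x * Eg a) w = (\<Sum>i\<le>Suc (length w'). if i = length w' then (if b = a then coef x w' else 0) else 0)"
    unfolding coef_mult snoc
    by (rule sum.cong) (auto simp: Eg_def drop_append Suc_diff_le le_Suc_eq)
  also have "\<dots> = (if b = a then coef x w' else 0)" by simp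
  finally show ?thesis using snoc by simp
qed

lemma coef_mult_Eg_left: "coef (Eg a * x) w = (if w \<noteq> [] \<and> hd w = a then coef x (tl w) else 0)"
proof (cases w)
  case Nil then show ?thesis by (simp add: coef_mult Eg_def)
next
  case (Cons b w')
  have "coef (Eg a * x) w = (\<Sum>i\<le>Suc (length w'). if i = 1 then (if b = a then coef x w' else 0) else 0)"
    unfolding coef_mult Cons
  proof (rule sum.cong)
    show "{..length (b # w')} = {..Suc (length w')}" by simp
    fix i assume i: "i \<in> {..Suc (length w')}"
    show "coef (Eg a) (take i (b # w')) * coef x (drop i (b # w')) =
      (if i = 1 then if b = a then coef x w' else 0 else 0)"
      using i by (cases i; cases w') (auto simp: Eg_def)
  qed
  also have "\<dots> = (if b = a then coef x w' else 0)" by (subst sum.delta) auto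
  finally show ?thesis using Cons by simp
qed

definition Cn :: "nat list \<Rightarrow> nat \<Rightarrow> nat list \<Rightarrow> real" where
  "Cn y i w = real (count_list (shuf (rev (take i y)) (drop i y)) w)"

definition Phi :: "nat list \<Rightarrow> nat list \<Rightarrow> real" where
  "Phi x w = (\<Sum>i\<le>length x. (-1) ^ i * real (length x - i) * Cn x i w)"

definition Psi :: "nat list \<Rightarrow> nat list \<Rightarrow> real" where
  "Psi y w = (\<Sum>i\<le>length y. (-1) ^ i * Cn y i w)"

lemma Psi_Cons: "Psi y (c # w) = 0"
proof -
  let ?n = "length y"
  define U where "U j = (if j < ?n \<and> y ! j = c then real (count_list (shuf (rev (take j y)) (drop (Suc j) y)) w) else 0)" for j
  have t: "Cn y i (c # w) = (if i = 0 then 0 else U (i - 1)) + U i" if "i \<le> ?n" for i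
  proof -
    have B: "(if drop i y \<noteq> [] \<and> hd (drop i y) = c then count_list (shuf (rev (take i y)) (tl (drop i y))) w else 0)
        = (if i < ?n \<and> y ! i = c then count_list (shuf (rev (take i y)) (drop (Suc i) y)) w else 0)"
      using that by (auto simp: hd_drop_conv_nth drop_Suc tl_drop)
    have A: "(if rev (take i y) \<noteq> [] \<and> hd (rev (take i y)) = c then count_list (shuf (tl (rev (take i y))) (drop i y)) w else 0)
        = (if i = 0 then 0 else if y ! (i - 1) = c then count_list (shuf (rev (take (i - 1) y)) (drop i y)) w else 0)"
    proof (cases i)
      case 0 then show ?thesis by simp
    next
      case (Suc j)
      then have "take i y = take j y @ [y ! j]" using that by (simp add: take_Suc_conv_app_nth)
      then show ?thesis using Suc by simp
    qed
    show ?thesis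
      unfolding Cn_def cnt_Cons of_nat_add
      using that by (subst A, subst B) (auto simp: U_def)
  qed
  have "Psi y (c # w) = (\<Sum>i\<le>?n. (-1) ^ i * (if i = 0 then 0 else U (i - 1))) + (\<Sum>i\<le>?n. (-1) ^ i * U i)"
    unfolding Psi_def by (simp add: t distrib_left sum.distrib)
  also have "\<dots> = 0"
  proof (cases ?n)
    case 0 then show ?thesis by (simp add: U_def)
  next
    case (Suc m)
    have "(\<Sum>i\<le>?n. (-1) ^ i * (if i = 0 then 0 else U (i - 1))) = (\<Sum>j\<le>m. - ((-1) ^ j * U j))"
      unfolding Suc by (subst sum.atMost_Suc_shift) simp
    moreover have "(\<Sum>i\<le>?n. (-1) ^ i * U i) = (\<Sum>j\<le>m. (-1) ^ j * U j)"
      unfolding Suc by (simp add: U_def Suc)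
    ultimately show ?thesis by (simp add: sum_negf)
  qed
  finally show ?thesis .
qed

lemma Psi_nonNil: "w \<noteq> [] \<Longrightarrow> Psi y w = 0"
  by (cases w) (simp_all add: Psi_Cons)

lemma Phi_snoc:
  assumes w: "w \<noteq> []"
  shows "Phi x (w @ [a]) = (if x \<noteq> [] \<and> last x = a then Phi (butlast x) w else 0) -
     (if x \<noteq> [] \<and> hd x = a then Phi (tl x) w else 0)"
proof (cases "x = []")
  case True then show ?thesis by (simp add: Phi_def)
next
  case False
  obtain h t where ht: "x = h # t" using False by (cases x) auto
  obtain b l where bl: "x = b @ [l]" using False by (cases x rule: rev_cases) auto
  define m where "m = length t"
  have n1: "length x = Suc m" using ht by (simp add: m_def)
  then have n2: "length b = m" using bl by simp
  note n = n1 n2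
  have tA: "(if rev (take i x) \<noteq> [] \<and> last (rev (take i x)) = a then
        real (count_list (shuf (butlast (rev (take i x))) (drop i x)) w) else 0)
      = (if i = 0 then 0 else if h = a then Cn t (i - 1) w else 0)" for i
    unfolding ht Cn_def by (cases i) auto
  have tB: "(if drop i x \<noteq> [] \<and> last (drop i x) = a then
        real (count_list (shuf (rev (take i x)) (butlast (drop i x))) w) else 0)
      = (if i < Suc m \<and> l = a then Cn b i w else 0)" if "i \<le> Suc m" for i
  proof (cases "i = Suc m")
    case True then show ?thesis using n unfolding bl by simp
  next
    case False
    then have "i \<le> length b" using that n by simp
    then show ?thesis unfolding bl Cn_def using n by (auto simp: drop_append take_append)
  qed
  have "Phi x (w @ [a]) = (\<Sum>i\<le>Suc m. (-1) ^ i * real (Suc m - i) * (if i = 0 then 0 else if h = a then Cn t (i - 1) w else 0))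
      + (\<Sum>i\<le>Suc m. (-1) ^ i * real (Suc m - i) * (if i < Suc m \<and> l = a then Cn b i w else 0))"
    unfolding Phi_def n sum.distrib[symmetric]
  proof (intro sum.cong refl)
    fix i assume "i \<in> {..Suc m}"
    then have i: "i \<le> Suc m" by simp
    show "(-1) ^ i * real (Suc m - i) * Cn x i (w @ [a]) =
      (-1) ^ i * real (Suc m - i) * (if i = 0 then 0 else if h = a then Cn t (i - 1) w else 0) +
      (-1) ^ i * real (Suc m - i) * (if i < Suc m \<and> l = a then Cn b i w else 0)"
      unfolding Cn_def[of x] cnt_snoc of_nat_add
      by (subst tA[symmetric], subst tB[OF i, symmetric]) (simp add: algebra_simps)
  qed
  also have "(\<Sum>i\<le>Suc m. (-1) ^ i * real (Suc m - i) * (if i = 0 then 0 else if h = a then Cn t (i - 1) w else 0))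
      = - (if h = a then Phi t w else 0)"
    by (subst sum.atMost_Suc_shift) (simp add: Phi_def m_def sum_negf sum_distrib_left)
  also have "(\<Sum>i\<le>Suc m. (-1) ^ i * real (Suc m - i) * (if i < Suc m \<and> l = a then Cn b i w else 0))
      = (if l = a then Phi b w + Psi b w else 0)"
  proof -
    have "(\<Sum>i\<le>Suc m. (-1) ^ i * real (Suc m - i) * (if i < Suc m \<and> l = a then Cn b i w else 0))
        = (\<Sum>i\<le>m. (-1) ^ i * real (Suc m - i) * (if l = a then Cn b i w else 0))"
      by (simp add: sum.atMost_Suc)
    also have "\<dots> = (if l = a then Phi b w + Psi b w else 0)"
      unfolding Phi_def Psi_def n sum.distrib[symmetric]
      by (auto intro!: sum.cong simp: Suc_diff_le algebra_simps)
    finally show ?thesis .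
  qed
  finally have eq: "Phi x (w @ [a]) = (if l = a then Phi b w + Psi b w else 0) - (if h = a then Phi t w else 0)" by simp
  have xs1: "last x = l" "butlast x = b" by (simp_all add: bl)
  have xs2: "hd x = h" "tl x = t" by (simp_all add: ht)
  note xs = xs1 xs2
  show ?thesis using eq False Psi_nonNil[OF w] by (simp add: xs)
qed

lemma Phi_len: "Phi x w \<noteq> 0 \<Longrightarrow> length w = length x"
proof (rule ccontr)
  assume "Phi x w \<noteq> 0" "length w \<noteq> length x"
  then have "Cn x i w = 0" if "i \<le> length x" for i
    using that cnt_length[of "rev (take i x)" "drop i x" w] by (auto simp: Cn_def)
  then have "Phi x w = 0" by (simp add: Phi_def)
  with \<open>Phi x w \<noteq> 0\<close> show False by simp
qed

lemma Phi_single: "Phi x [a] = (if x = [a] then 1 else 0)"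
proof (cases "length x = 1")
  case True
  then obtain b where "x = [b]" by (cases x) auto
  then show ?thesis by (simp add: Phi_def Cn_def)
next
  case False
  then have "Phi x [a] = 0" using Phi_len[of x "[a]"] by auto
  then show ?thesis using False by auto
qed

lemma rr_Phi: "coef (rr (rev w)) x = Phi x w"
proof (induction w arbitrary: x rule: rev_induct)
  case Nil
  show ?case
  proof (cases "x = []")
    case True then show ?thesis by (simp add: Phi_def)
  next
    case False
    then have "Cn x i [] = 0" if "i \<le> length x" for i
      using that by (auto simp: Cn_def cnt_Nil)
    then show ?thesis by (simp add: Phi_def)
  qed
next
  case (snoc a w)
  show ?case
  proof (cases "w = []")
    case True then show ?thesis by (simp add: Phi_single Eg_def)
  next
    case False
    then show ?thesis
      by (simp add: coef_mult_Eg_left coef_mult_Eg_right snoc.IH Phi_snoc)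
  qed
qed

lemma sum_count_list:
  assumes "finite W" "\<And>w. f w \<noteq> 0 \<Longrightarrow> w \<in> W"
  shows "(\<Sum>w\<in>W. f w * real (count_list L w)) = (\<Sum>w\<leftarrow>L. (f w :: real))"
proof (induction L)
  case Nil then show ?case by simp
next
  case (Cons a L)
  have "f w * real (count_list (a # L) w) = (if w = a then f a else 0) + f w * real (count_list L w)" for w
    by (auto simp: algebra_simps)
  then have "(\<Sum>w\<in>W. f w * real (count_list (a # L) w)) = (\<Sum>w\<in>W. (if w = a then f a else 0)) + (\<Sum>w\<in>W. f w * real (count_list L w))"
    by (simp add: sum.distrib)
  also have "(\<Sum>w\<in>W. (if w = a then f a else 0)) = f a"
    using assms by (auto simp: sum.delta')
  finally show ?case using Cons by simp
qed

lemma dsw_coef: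
  assumes W: "finite W" "\<And>w. coef z w \<noteq> 0 \<Longrightarrow> w \<in> W" and z: "prim z"
  shows "(\<Sum>w\<in>W. coef z w * Phi x w) = real (length x) * coef z x"
proof -
  let ?n = "length x"
  have "(\<Sum>w\<in>W. coef z w * Phi x w) = (\<Sum>i\<le>?n. (-1) ^ i * real (?n - i) * (\<Sum>w\<in>W. coef z w * Cn x i w))"
    unfolding Phi_def by (simp add: sum_distrib_left sum_distrib_right mult_ac sum.swap[of _ W])
  also have "\<dots> = (\<Sum>i\<le>?n. (-1) ^ i * real (?n - i) * shf (coef z) (rev (take i x)) (drop i x))"
    unfolding Cn_def shf_def using sum_count_list[OF W] by simp
  also have "\<dots> = (\<Sum>i\<le>?n. if i = 0 then real ?n * coef z x else 0)"
  proof (intro sum.cong refl)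
    fix i assume i: "i \<in> {..?n}"
    show "(-1) ^ i * real (?n - i) * shf (coef z) (rev (take i x)) (drop i x) = (if i = 0 then real ?n * coef z x else 0)"
    proof (cases "i = 0 \<or> i = ?n")
      case True then show ?thesis by auto
    next
      case False
      then have "rev (take i x) \<noteq> []" "drop i x \<noteq> []" using i by auto
      then show ?thesis using False z by (simp add: prim_def)
    qed
  qed
  also have "\<dots> = real ?n * coef z x" by simp
  finally show ?thesis .
qed



lemma sum_fun_apply: "(\<Sum>i\<in>A. (f i :: 'a \<Rightarrow> real)) x = (\<Sum>i\<in>A. f i x)"
  by (induction A rule: infinite_finite_induct) auto

definition tr :: "nat \<Rightarrow> ts \<Rightarrow> tensor" where
  "tr k x = (\<lambda>w. if length w \<le> k then coef x w else 0)"

lemma tr_apply: "tr k x w = (if length w \<le> k then coef x w else 0)" by (simp add: tr_def)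

lemma tr_eq_iff: "tr k x = tr k y \<longleftrightarrow> eqk k x y"
  by (auto simp: tr_def eqk_def fun_eq_iff)

lemma tr_eqI: "eqk k x y \<Longrightarrow> tr k x = tr k y" by (simp add: tr_eq_iff)

lemma eqk_TS_tr: "eqk k (TS (tr k x)) x" by (simp add: eqk_def tr_def)

lemma tmul_tr: "tmul k a b = tr k (TS a * TS b)"
  by (simp add: tmul_def tr_def coef_mult fun_eq_iff)

lemma tmul_tr2: "tmul k (tr k x) (tr k y) = tr k (x * y)"
  unfolding tmul_tr by (intro tr_eqI eqk_mult eqk_TS_tr)

lemma TS_tone: "TS tone = 1" by (simp add: tone_def one_ts_def)
lemma tone_tr: "tone = tr k 1" by (simp add: tone_def tr_def fun_eq_iff)

lemma TS_add: "TS (a + b) = TS a + TS b" by (rule ts_eqI) simp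
lemma TS_diff: "TS (a - b) = TS a - TS b" by (rule ts_eqI) simp
lemma TS_uminus: "TS (- a) = - TS a" by (rule ts_eqI) simp
lemma TS_zero: "TS 0 = 0" by (rule ts_eqI) simp
lemma TS_zero': "TS (\<lambda>w. 0) = 0" by (rule ts_eqI) simp
lemma TS_tsmul: "TS (tsmul c a) = c *\<^sub>R TS a" by (rule ts_eqI) (simp add: tsmul_def)

lemma tr_add: "tr k (x + y) = tr k x + tr k y" by (simp add: tr_def fun_eq_iff)
lemma tr_diff: "tr k (x - y) = tr k x - tr k y" by (simp add: tr_def fun_eq_iff)
lemma tr_zero: "tr k 0 = 0" by (simp add: tr_def fun_eq_iff)
lemma tr_scaleR: "tr k (c *\<^sub>R x) = tsmul c (tr k x)" by (simp add: tr_def tsmul_def fun_eq_iff)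
lemma tr_sum: "tr k (\<Sum>i\<in>A. f i) = (\<Sum>i\<in>A. tr k (f i))"
  by (simp add: fun_eq_iff sum_fun_apply tr_def coef_sum)

lemma tpow_tr: "tpow k x n = tr k (TS x ^ n)"
proof (induction n)
  case 0 then show ?case by (simp add: tone_tr)
next
  case (Suc n)
  have "tpow k x (Suc n) = tmul k (tr k (TS x ^ n)) x" by (simp add: Suc)
  also have "\<dots> = tr k (TS x ^ n * TS x)"
    unfolding tmul_tr by (intro tr_eqI eqk_mult eqk_TS_tr eqk_refl)
  finally show ?case by (simp only: power_Suc2)
qed

lemma lowd1_TS: "a [] = 0 \<Longrightarrow> lowd 1 (TS a)" by (simp add: lowd_def)

lemma texp_tr: assumes "a [] = 0" shows "texp k a = tr k (Exp (TS a))"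
proof -
  have "texp k a = tr k (\<Sum>l\<le>k. (1 / fact l) *\<^sub>R TS a ^ l)"
    by (simp add: texp_def tr_sum tr_scaleR tpow_tr)
  also have "\<dots> = tr k (Exp (TS a))"
    by (rule tr_eqI) (auto simp: eqk_def coef_sum coef_Exp_N[OF lowd1_TS[of a, OF assms]])
  finally show ?thesis .
qed

lemma tlog_tr: assumes "s [] = 1" shows "tlog k s = tr k (Log (TS s))"
proof -
  have l: "lowd 1 (TS s - 1)" using assms by (simp add: lowd_def)
  have "tlog k s = tr k (\<Sum>l\<in>{1..k}. ((-1) ^ (l + 1) / real l) *\<^sub>R (TS s - 1) ^ l)"
    by (simp only: tlog_def tr_sum tr_scaleR tpow_tr TS_diff TS_tone)
  also have "\<dots> = tr k (Log (TS s))"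
  proof (rule tr_eqI, unfold eqk_def, intro allI impI)
    fix w :: "nat list" assume w: "length w \<le> k"
    have "coef (Log (TS s)) w = (\<Sum>n\<le>k. fps_ln 1 $ n * coef ((TS s - 1) ^ n) w)"
      unfolding Log_def by (rule coef_evs_N[OF l w])
    also have "\<dots> = (\<Sum>n\<in>{1..k}. fps_ln 1 $ n * coef ((TS s - 1) ^ n) w)"
      by (rule sum.mono_neutral_right) (auto simp: Suc_le_eq)
    also have "\<dots> = (\<Sum>n\<in>{1..k}. (-1) ^ (n + 1) / real n * coef ((TS s - 1) ^ n) w)"
    proof (rule sum.cong[OF refl])
      fix n assume "n \<in> {1..k}"
      then obtain j where "n = Suc j" by (cases n) auto
      then show "fps_ln 1 $ n * coef ((TS s - 1) ^ n) w = (-1) ^ (n + 1) / real n * coef ((TS s - 1) ^ n) w"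
        by (simp add: fps_ln_nth)
    qed
    finally show "coef (\<Sum>l\<in>{1..k}. ((-1) ^ (l + 1) / real l) *\<^sub>R (TS s - 1) ^ l) w = coef (Log (TS s)) w"
      by (simp add: coef_sum)
  qed
  finally show ?thesis .
qed

definition letters :: "nat \<Rightarrow> ts \<Rightarrow> bool" where
  "letters d x \<longleftrightarrow> (\<forall>w. coef x w \<noteq> 0 \<longrightarrow> set w \<subseteq> {..<d})"

lemma letters_add: "letters d x \<Longrightarrow> letters d y \<Longrightarrow> letters d (x + y)"
  unfolding letters_def by (metis add.right_neutral add_0 coef_simps(3))
lemma letters_diff: "letters d x \<Longrightarrow> letters d y \<Longrightarrow> letters d (x - y)"
  unfolding letters_def by (metis diff_zero diff_0 coef_simps(4) neg_0_equal_iff_equal)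
lemma letters_uminus: "letters d x \<Longrightarrow> letters d (- x)"
  by (auto simp: letters_def)
lemma letters_scaleR: "letters d x \<Longrightarrow> letters d (c *\<^sub>R x)"
  by (auto simp: letters_def)
lemma letters_one: "letters d 1" by (auto simp: letters_def)
lemma letters_mult: assumes "letters d x" "letters d y" shows "letters d (x * y)"
  unfolding letters_def
proof (intro allI impI)
  fix w assume "coef (x * y) w \<noteq> 0"
  then obtain i where "coef x (take i w) \<noteq> 0" "coef y (drop i w) \<noteq> 0"
    unfolding coef_mult by (metis (no_types, lifting) mult_eq_0_iff sum.neutral)
  then have "set (take i w) \<subseteq> {..<d}" "set (drop i w) \<subseteq> {..<d}" using assms by (auto simp: letters_def)
  then show "set w \<subseteq> {..<d}" by (metis append_take_drop_id set_append Un_subset_iff)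
qed
lemma letters_power: "letters d x \<Longrightarrow> letters d (x ^ n)"
  by (induction n) (auto intro: letters_mult letters_one)
lemma letters_evs: assumes "letters d y" shows "letters d (evs c y)"
  unfolding letters_def
proof (intro allI impI)
  fix w assume "coef (evs c y) w \<noteq> 0"
  then obtain n where "coef (y ^ n) w \<noteq> 0"
    unfolding coef_evs by (metis (no_types, lifting) mult_eq_0_iff sum.neutral)
  then show "set w \<subseteq> {..<d}" using letters_power[OF assms, of n] by (auto simp: letters_def)
qed
lemma letters_Exp: "letters d x \<Longrightarrow> letters d (Exp x)"
  unfolding Exp_def by (rule letters_evs)
lemma letters_Log: "letters d x \<Longrightarrow> letters d (Log x)"
  unfolding Log_def by (intro letters_evs letters_diff letters_one)

lemma tr_Tset: "letters d x \<Longrightarrow> tr k x \<in> Tset d k"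
  by (auto simp: Tset_def tr_def letters_def)
lemma Tset_letters: "a \<in> Tset d k \<Longrightarrow> letters d (TS a)"
  by (auto simp: Tset_def letters_def)
lemma Tset_tr_TS: "a \<in> Tset d k \<Longrightarrow> tr k (TS a) = a"
  by (auto simp: Tset_def tr_def fun_eq_iff)

lemma prim_tr: assumes "prim x" shows "prim (TS (tr k x))"
  unfolding prim_def
proof (intro conjI allI impI)
  show "coef (TS (tr k x)) [] = 0" using assms by (simp add: prim_def tr_def)
  fix u v :: "nat list" assume uv: "u \<noteq> []" "v \<noteq> []"
  have "shf (coef (TS (tr k x))) u v = shf (\<lambda>w. if length u + length v \<le> k then coef x w else 0) u v"
    by (rule shf_cong) (simp add: tr_def)
  also have "\<dots> = 0" using assms uv by (cases "length u + length v \<le> k") (simp_all add: prim_def shf_zero)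
  finally show "shf (coef (TS (tr k x))) u v = 0" .
qed

lemma tgen_tr: "tgen k i = tr k (Eg i)"
  by (auto simp: tgen_def tr_def Eg_def fun_eq_iff)

lemma prim_Eg: "prim (Eg i)"
  unfolding prim_def
proof (intro conjI allI impI)
  show "coef (Eg i) [] = 0" by (simp add: Eg_def)
  fix u v :: "nat list" assume uv: "u \<noteq> []" "v \<noteq> []"
  have "shf (coef (Eg i)) u v = shf (\<lambda>w. 0) u v"
    by (rule shf_cong) (use uv in \<open>auto simp: Eg_def neq_Nil_conv\<close>)
  then show "shf (coef (Eg i)) u v = 0" by (simp add: shf_zero)
qed

lemma letters_Eg: "i < d \<Longrightarrow> letters d (Eg i)" by (simp add: letters_def Eg_def)

lemma tbracket_tr: "tbracket k (tr k x) (tr k y) = tr k (x * y - y * x)"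
  by (simp add: tbracket_def tmul_tr2 tr_diff)

lemma lie_props: "a \<in> liealg d k \<Longrightarrow> a \<in> Tset d k \<and> prim (TS a)"
proof (induction rule: liealg.induct)
  case (gen i)
  then show ?case by (simp add: tgen_tr tr_Tset letters_Eg prim_tr prim_Eg)
next
  case zero
  then show ?case by (simp add: TS_zero TS_zero' prim_zero Tset_def)
next
  case (add a b)
  have "letters d (TS a + TS b)" using add by (intro letters_add Tset_letters) auto
  then have T: "tr k (TS a + TS b) \<in> Tset d k" by (rule tr_Tset)
  have e: "tr k (TS a + TS b) = a + b" using add Tset_tr_TS[of a d k] Tset_tr_TS[of b d k]
    by (simp only: tr_add)
  have P: "prim (TS (a + b))" unfolding TS_add using add by (intro prim_add) auto
  show ?case using T P unfolding e by (rule conjI)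
next
  case (smul a c)
  have "letters d (c *\<^sub>R TS a)" using smul by (intro letters_scaleR Tset_letters) auto
  then have "tr k (c *\<^sub>R TS a) \<in> Tset d k" by (rule tr_Tset)
  then show ?case using smul Tset_tr_TS[of a d k] by (simp add: tr_scaleR TS_tsmul prim_scaleR)
next
  case (bracket a b)
  have ta: "a = tr k (TS a)" "b = tr k (TS b)"
    using bracket Tset_tr_TS[of a d k] Tset_tr_TS[of b d k] by simp_all
  have "tbracket k a b = tr k (TS a * TS b - TS b * TS a)"
    by (subst ta(1), subst ta(2), rule tbracket_tr)
  moreover have "letters d (TS a * TS b - TS b * TS a)"
    using bracket by (intro letters_diff letters_mult Tset_letters) auto
  moreover have "prim (TS a * TS b - TS b * TS a)"
    using bracket by (intro prim_bracket) auto
  ultimately show ?case by (simp add: tr_Tset prim_tr)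
qed

lemma liealg_sum: "finite A \<Longrightarrow> (\<And>i. i \<in> A \<Longrightarrow> f i \<in> liealg d k) \<Longrightarrow> (\<Sum>i\<in>A. f i) \<in> liealg d k"
proof (induction A rule: finite_induct)
  case empty show ?case by (simp only: sum.empty liealg.zero)
next
  case (insert a A) then show ?case by (subst sum.insert) (auto intro: liealg.add)
qed

lemma rr_lie: "set w \<subseteq> {..<d} \<Longrightarrow> tr k (rr w) \<in> liealg d k"
proof (induction w)
  case Nil then show ?case by (simp only: rr.simps tr_zero liealg.zero)
next
  case (Cons a u)
  show ?case
  proof (cases "u = []")
    case True
    then show ?thesis using Cons by (simp add: tgen_tr[symmetric] liealg.gen)
  next
    case False
    have "tr k (rr (a # u)) = tbracket k (tr k (rr u)) (tgen k a)"
      using False by (simp add: tgen_tr tbracket_tr)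
    then show ?thesis using Cons by (simp add: liealg.bracket liealg.gen)
  qed
qed

lemma dsw: assumes z: "z \<in> Tset d k" and p: "prim (TS z)" shows "z \<in> liealg d k"
proof -
  define W where "W = {w. set w \<subseteq> {..<d} \<and> length w \<le> k}"
  have finW: "finite W" unfolding W_def by (rule finite_lists_length_le) simp
  have supp: "coef (TS z) w \<noteq> 0 \<Longrightarrow> w \<in> W" for w using z by (auto simp: W_def Tset_def)
  have eq: "z = (\<Sum>w\<in>W. tsmul (z w / real (length w)) (tr k (rr (rev w))))"
  proof (rule ext)
    fix x :: "nat list"
    show "z x = (\<Sum>w\<in>W. tsmul (z w / real (length w)) (tr k (rr (rev w)))) x"
    proof (cases "length x \<le> k")
      case False
      have "z x = 0" using z False unfolding Tset_def by blast
      then show ?thesis using False by (simp add: sum_fun_apply tsmul_def tr_def)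
    next
      case True
      have "(\<Sum>w\<in>W. tsmul (z w / real (length w)) (tr k (rr (rev w)))) x =
          (\<Sum>w\<in>W. z w / real (length w) * Phi x w)"
        using True by (simp add: sum_fun_apply tsmul_def tr_def rr_Phi)
      also have "\<dots> = (\<Sum>w\<in>W. z w * Phi x w) / real (length x)"
        unfolding sum_divide_distrib
        by (intro sum.cong refl) (metis Phi_len mult_zero_right times_divide_eq_left mult.commute)
      also have "\<dots> = real (length x) * z x / real (length x)"
        using dsw_coef[OF finW supp p, of x] by simp
      also have "\<dots> = z x"
      proof (cases "x = []")
        case True then show ?thesis using p by (simp add: prim_def)
      next
        case False then show ?thesis by simp
      qed
      finally show ?thesis ..
    qed
  qed
  have "(\<Sum>w\<in>W. tsmul (z w / real (length w)) (tr k (rr (rev w)))) \<in> liealg d k"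
    by (intro liealg_sum finW liealg.smul rr_lie) (auto simp: W_def)
  then show ?thesis using eq by simp
qed

lemma tmul_assoc: "tmul k (tmul k a b) c = tmul k a (tmul k b c)"
proof -
  have "tmul k (tmul k a b) c = tr k (TS a * TS b * TS c)"
    unfolding tmul_tr[of k a b] tmul_tr[of k _ c]
    by (intro tr_eqI eqk_mult eqk_TS_tr eqk_refl)
  also have "\<dots> = tmul k a (tmul k b c)"
    unfolding tmul_tr[of k b c] tmul_tr[of k a]
    by (simp only: mult.assoc) (intro tr_eqI eqk_mult eqk_TS_tr eqk_refl eqk_sym)
  finally show ?thesis .
qed

lemma tmul_tone_left: "y \<in> Tset d k \<Longrightarrow> tmul k tone y = y"
  by (simp add: tmul_tr TS_tone Tset_tr_TS)
lemma tmul_tone_right: "y \<in> Tset d k \<Longrightarrow> tmul k y tone = y"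
  by (simp add: tmul_tr TS_tone Tset_tr_TS)

lemma tinv_eq: assumes y: "y \<in> Tset d k" and xy: "tmul k x y = tone" and yx: "tmul k y x = tone"
  shows "tinv d k x = y"
  unfolding tinv_def
proof (rule the_equality)
  show "y \<in> Tset d k \<and> tmul k x y = tone \<and> tmul k y x = tone" using assms by simp
  fix y' assume h: "y' \<in> Tset d k \<and> tmul k x y' = tone \<and> tmul k y' x = tone"
  have "y' = tmul k y' (tmul k x y)" using h xy tmul_tone_right[of y' d k] by simp
  also have "\<dots> = tmul k (tmul k y' x) y" by (simp add: tmul_assoc)
  also have "\<dots> = y" using h y by (simp add: tmul_tone_left)
  finally show "y' = y" .
qed

lemma tinv_Exp: assumes "lowd 1 A" "letters d A"
  shows "tinv d k (tr k (Exp A)) = tr k (Exp (- A))"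
proof (rule tinv_eq)
  show "tr k (Exp (- A)) \<in> Tset d k" using assms by (intro tr_Tset letters_Exp letters_uminus)
  show "tmul k (tr k (Exp A)) (tr k (Exp (- A))) = tone"
    by (simp add: tmul_tr2 Exp_inv[OF assms(1)] tone_tr[symmetric])
  show "tmul k (tr k (Exp (- A))) (tr k (Exp A)) = tone"
    by (simp add: tmul_tr2 Exp_inv[OF assms(1)] tone_tr[symmetric])
qed



lemma tlog_trk: "coef X [] = 1 \<Longrightarrow> tlog k (tr k X) = tr k (Log X)"
  by (subst tlog_tr) (simp_all add: tr_apply, intro tr_eqI eqk_Log eqk_TS_tr)

lemma texp_trk: "coef X [] = 0 \<Longrightarrow> texp k (tr k X) = tr k (Exp X)"
  by (subst texp_tr) (simp_all add: tr_apply, intro tr_eqI eqk_Exp eqk_TS_tr)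

lemma lie_facts: assumes "a \<in> liealg d k"
  shows "prim (TS a)" "lowd 1 (TS a)" "letters d (TS a)" "a [] = 0"
proof -
  have T: "a \<in> Tset d k" and P: "prim (TS a)" using lie_props[OF assms] by auto
  show "prim (TS a)" by (rule P)
  show "lowd 1 (TS a)" by (rule prim_lowd[OF P])
  show "letters d (TS a)" by (rule Tset_letters[OF T])
  show "a [] = 0" using P by (simp add: prim_def)
qed

theorem proposition4p4:
  fixes d k :: nat and x1 x2 :: tensor
  assumes "x1 \<in> Gset d k" and "x2 \<in> Gset d k"
  shows "bary d k [x1, x2] =
    tmul k x1 (texp k (tsmul (1/2) (tlog k (tmul k (tinv d k x1) x2))))"
proof -
  obtain a1 where a1: "a1 \<in> liealg d k" "x1 = texp k a1" using assms(1) by (auto simp: Gset_def)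
  obtain a2 where a2: "a2 \<in> liealg d k" "x2 = texp k a2" using assms(2) by (auto simp: Gset_def)
  define A1 where "A1 = TS a1"
  define A2 where "A2 = TS a2"
  note f1 = lie_facts[OF a1(1), folded A1_def]
  note f2 = lie_facts[OF a2(1), folded A2_def]
  define X1 where "X1 = Exp A1"
  define X2 where "X2 = Exp A2"
  define X1i where "X1i = Exp (- A1)"
  have x1: "x1 = tr k X1" unfolding a1(2) X1_def A1_def by (rule texp_tr) (rule f1(4))
  have x2: "x2 = tr k X2" unfolding a2(2) X2_def A2_def by (rule texp_tr) (rule f2(4))
  have tinv1: "tinv d k x1 = tr k X1i"
    unfolding x1 X1_def X1i_def by (rule tinv_Exp[OF f1(2) f1(3)])
  have X1X1i: "X1 * X1i = 1" "X1i * X1 = 1"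
    unfolding X1_def X1i_def using Exp_inv[OF f1(2)] by auto
  define G where "G = X1i * X2"
  have g: "tmul k (tinv d k x1) x2 = tr k G" by (simp add: tinv1 x2 tmul_tr2 G_def)
  have glX1: "gl X1" unfolding X1_def by (rule gl_Exp[OF f1(1)])
  have glX2: "gl X2" unfolding X2_def by (rule gl_Exp[OF f2(1)])
  have glX1i: "gl X1i" unfolding X1i_def by (rule gl_Exp[OF prim_uminus[OF f1(1)]])
  have glG: "gl G" unfolding G_def by (rule gl_mult[OF glX1i glX2])
  have G1: "coef G [] = 1" using glG by (simp add: gl_def)
  define L where "L = Log G"
  have lL: "lowd 1 L" unfolding L_def by (rule lowd1_Log)
  have pL: "prim L" unfolding L_def by (rule gl_Log[OF glG])
  have GL: "G = Exp L" unfolding L_def by (rule Exp_Log[OF G1, symmetric])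
  have lg: "tlog k (tr k G) = tr k L" unfolding L_def by (rule tlog_trk[OF G1])
  define Y where "Y = Exp ((1/2) *\<^sub>R L)"
  have ey: "texp k (tsmul (1/2) (tr k L)) = tr k Y"
    unfolding Y_def tr_scaleR[symmetric] by (rule texp_trk) (simp add: L_def)
  define M where "M = X1 * Y"
  have rhs: "tmul k x1 (texp k (tsmul (1/2) (tlog k (tmul k (tinv d k x1) x2)))) = tr k M"
    by (simp only: g lg ey) (simp only: x1 tmul_tr2 M_def)
  have lA1: "letters d A1" and lA2: "letters d A2" using f1 f2 by auto
  have letM: "letters d M"
    unfolding M_def Y_def L_def G_def X1_def X2_def X1i_def
    by (intro letters_mult letters_Exp letters_scaleR letters_Log letters_uminus lA1 lA2)
  have glY: "gl Y" unfolding Y_def by (rule gl_Exp[OF prim_scaleR[OF pL]])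
  have glM: "gl M" unfolding M_def by (rule gl_mult[OF glX1 glY])
  have M1: "coef M [] = 1" using glM by (simp add: gl_def)
  have lLM: "lowd 1 (Log M)" by (rule lowd1_Log)
  define c where "c = tr k (Log M)"
  have c_lie: "c \<in> liealg d k"
    unfolding c_def by (intro dsw tr_Tset letters_Log letM prim_tr gl_Log glM)
  have m0G: "tr k M \<in> Gset d k"
  proof -
    have "texp k c = tr k (Exp (Log M))" unfolding c_def by (rule texp_trk) simp
    also have "\<dots> = tr k M" by (simp add: Exp_Log[OF M1])
    finally show ?thesis using c_lie unfolding Gset_def by (auto intro: sym)
  qed
  define P where "P = Exp (- Log M)"
  have tinvm: "tinv d k (tr k M) = tr k P"
  proof -
    have "tinv d k (tr k M) = tinv d k (tr k (Exp (Log M)))" by (simp add: Exp_Log[OF M1])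
    also have "\<dots> = tr k P" unfolding P_def
      by (rule tinv_Exp[OF lLM letters_Log[OF letM]])
    finally show ?thesis .
  qed
  have PM: "P * M = 1"
    using Exp_inv(1)[OF lLM] unfolding P_def Exp_Log[OF M1] .
  define Yi where "Yi = Exp (- ((1/2) *\<^sub>R L))"
  have lhL: "lowd 1 ((1/2) *\<^sub>R L)" using lL by (rule lowd_scaleR)
  have YYi: "Y * Yi = 1" unfolding Y_def Yi_def by (rule Exp_inv(2)[OF lhL])
  have X1M: "X1 = M * Yi" by (simp add: M_def mult.assoc YYi)
  have PX1: "P * X1 = Yi" by (simp add: X1M mult.assoc[symmetric] PM)
  have X2G: "X2 = X1 * G" by (simp add: G_def mult.assoc[symmetric] X1X1i)
  have PX2: "P * X2 = Exp ((1/2) *\<^sub>R L)"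
  proof -
    have "P * X2 = Yi * G" by (simp add: X2G mult.assoc[symmetric] PX1)
    also have "\<dots> = Exp ((- (1/2)) *\<^sub>R L) * Exp (1 *\<^sub>R L)"
      unfolding Yi_def GL scaleR_minus_left scaleR_one ..
    also have "\<dots> = Exp ((- (1/2) + 1) *\<^sub>R L)" by (rule Exp_add_scale[OF lL])
    also have "(- (1/2) + 1 :: real) = 1/2" by simp
    finally show ?thesis .
  qed
  have eq1: "tlog k (tmul k (tinv d k (tr k M)) x1) = tr k (- ((1/2) *\<^sub>R L))"
  proof -
    have "tlog k (tmul k (tinv d k (tr k M)) x1) = tlog k (tr k Yi)"
      by (simp only: tinvm x1 tmul_tr2 PX1)
    also have "\<dots> = tr k (Log Yi)" by (rule tlog_trk) (simp add: Yi_def)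
    also have "\<dots> = tr k (- ((1/2) *\<^sub>R L))" unfolding Yi_def
      by (subst Log_Exp) (use lhL in \<open>auto intro: lowd_minus\<close>)
    finally show ?thesis .
  qed
  have eq2: "tlog k (tmul k (tinv d k (tr k M)) x2) = tr k ((1/2) *\<^sub>R L)"
  proof -
    have "tlog k (tmul k (tinv d k (tr k M)) x2) = tlog k (tr k (Exp ((1/2) *\<^sub>R L)))"
      by (simp only: tinvm x2 tmul_tr2 PX2)
    also have "\<dots> = tr k (Log (Exp ((1/2) *\<^sub>R L)))" by (rule tlog_trk) simp
    also have "\<dots> = tr k ((1/2) *\<^sub>R L)" by (simp add: Log_Exp[OF lhL])
    finally show ?thesis .
  qed
  have exist: "tr k M \<in> Gset d k \<and>
      sum_list (map (\<lambda>x. tlog k (tmul k (tinv d k (tr k M)) x)) [x1, x2]) = 0"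
  proof
    show "tr k M \<in> Gset d k" by (rule m0G)
    have "tr k (- ((1/2) *\<^sub>R L)) + tr k ((1/2) *\<^sub>R L) = tr k (- ((1/2) *\<^sub>R L) + (1/2) *\<^sub>R L)"
      by (simp only: tr_add)
    also have "\<dots> = 0" by (simp add: tr_zero)
    finally show "sum_list (map (\<lambda>x. tlog k (tmul k (tinv d k (tr k M)) x)) [x1, x2]) = 0"
      by (simp add: eq1 eq2)
  qed
  have uniq: "m = tr k M" if hm: "m \<in> Gset d k \<and>
      sum_list (map (\<lambda>x. tlog k (tmul k (tinv d k m) x)) [x1, x2]) = 0" for m
  proof -
    obtain c' where c': "c' \<in> liealg d k" "m = texp k c'" using hm by (auto simp: Gset_def)
    define C where "C = TS c'"
    note fc = lie_facts[OF c'(1), folded C_def]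
    define Mm where "Mm = Exp C"
    define Q where "Q = Exp (- C)"
    have mM: "m = tr k Mm" unfolding c'(2) Mm_def C_def by (rule texp_tr) (rule fc(4))
    have tinvm: "tinv d k m = tr k Q" unfolding mM Mm_def Q_def by (rule tinv_Exp[OF fc(2) fc(3)])
    have MmQ: "Mm * Q = 1" unfolding Mm_def Q_def by (rule Exp_inv(2)[OF fc(2)])
    define a where "a = Q * X1"
    define b where "b = Q * X2"
    have a1': "coef a [] = 1" unfolding a_def Q_def X1_def by (simp add: coef_mult)
    have b1': "coef b [] = 1" unfolding b_def Q_def X2_def by (simp add: coef_mult)
    have "tr k (Log a) + (tr k (Log b) + 0) = 0"
      using hm by (simp add: tinvm x1 x2 tmul_tr2 a_def[symmetric] b_def[symmetric] tlog_trk a1' b1')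
    then have "tr k (Log a + Log b) = tr k 0" by (simp add: tr_add tr_zero)
    then have "eqk k (Log a + Log b) 0" by (simp add: tr_eq_iff)
    then have "eqk k (Log a + Log b + - Log b) (0 + - Log b)" by (rule eqk_add[OF _ eqk_refl])
    then have eab: "eqk k (Log a) (- Log b)" by simp
    have lLb: "lowd 1 (Log b)" by (rule lowd1_Log)
    have "eqk k a (Exp (- Log b))"
      using eqk_Exp[OF eab] by (simp add: Exp_Log[OF a1'])
    then have "eqk k (a * b) (Exp (- Log b) * b)" by (rule eqk_mult) simp
    moreover have "Exp (- Log b) * b = 1"
      using Exp_inv(1)[OF lLb] by (simp add: Exp_Log[OF b1'])
    ultimately have ab: "eqk k (a * b) 1" by simp
    define y where "y = X1i * Mm"
    have ya: "y * a = 1"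
      by (simp add: y_def a_def mult.assoc[symmetric]) (simp add: mult.assoc MmQ X1X1i)
    have baG: "b = a * G"
      by (simp add: b_def a_def G_def mult.assoc[symmetric]) (simp add: mult.assoc X1X1i)
    have "eqk k (y * y * (a * b)) (y * y * 1)" by (rule eqk_mult[OF eqk_refl ab])
    moreover have "y * y * (a * b) = G"
    proof -
      have "y * y * (a * b) = y * (y * a) * a * G" by (simp add: baG mult.assoc)
      also have "\<dots> = G" by (simp add: ya)
      finally show ?thesis .
    qed
    ultimately have Gyy: "eqk k G (y * y)" by simp
    have y1: "coef y [] = 1" unfolding y_def X1i_def Mm_def by (simp add: coef_mult)
    have lLy: "lowd 1 (Log y)" by (rule lowd1_Log)
    have yy: "y * y = Exp (2 *\<^sub>R Log y)"
      using Exp_double[OF lLy] unfolding Exp_Log[OF y1] .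
    have e1: "eqk k (Log G) (Log (y * y))" by (rule eqk_Log[OF Gyy])
    have e2: "Log (y * y) = 2 *\<^sub>R Log y" unfolding yy by (rule Log_Exp[OF lowd_scaleR[OF lLy]])
    have "eqk k L (2 *\<^sub>R Log y)" using e1 unfolding e2 L_def .
    then have "eqk k ((1/2) *\<^sub>R L) ((1/2) *\<^sub>R (2 *\<^sub>R Log y))" by (rule eqk_scaleR)
    then have "eqk k ((1/2) *\<^sub>R L) (Log y)" by simp
    then have "eqk k (Exp ((1/2) *\<^sub>R L)) (Exp (Log y))" by (rule eqk_Exp)
    then have "eqk k Y y" unfolding Y_def[symmetric] Exp_Log[OF y1] .
    then have "eqk k (X1 * Y) (X1 * y)" by (rule eqk_mult[OF eqk_refl])
    moreover have "X1 * y = Mm" by (simp add: y_def mult.assoc[symmetric] X1X1i)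
    ultimately have "eqk k M Mm" by (simp add: M_def)
    then show ?thesis by (simp add: mM tr_eq_iff eqk_sym)
  qed
  have "bary d k [x1, x2] = tr k M"
    unfolding bary_def by (rule the_equality, rule exist, rule uniq, assumption)
  then show ?thesis using rhs by simp
qed


end
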